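(* Let $G=(V,E,W)$ be a finite connected weighted graph and let $\sigma$ be an inconsistent $d$-dimensional signature on $G$. Let $\rho$ denote the nullity of the connection Laplacian $\mathcal{L}^\sigma$. Then there exists a $(d-\rho)$-dimensional signature $\tau$ on $G$ such that $\mathcal{L}^\tau$ is invertible and $$\sigma\cong \Big(\bigoplus_{i=1}^{\rho}\iota^1\Big)\oplus\tau .$$
   Context: $G=(V,E,W)$: $V=\{1,\dots,n\}$, $E$ a set of undirected edges without loops or multiple edges, symmetric weights $w_{ij}>0$ iff $\{i,j\}\in E$, $\deg(i)=\sum_{j\sim i}w_{ij}$. The oriented edges are $E^{\mathrm{or}}=\{(i,j),(j,i):\{i,j\}\in E\}$. A $d$-dimensional signature is a map $\sigma:E^{\mathrm{or}}\to\mathsf{O}(d)$ with $\sigma_{ji}=\sigma_{ij}^{-1}=\sigma_{ij}^{\mathrm T}$. Its connection Laplacian $\mathcal{L}^\sigma$ is the $nd\times nd$ block matrix with $d\times d$ blocks $\mathcal{L}_{ii}=\deg(i)I_d$, $\mathcal{L}_{ij}=-w_{ij}\sigma_{ij}$ if $i\sim j$, and $0$ otherwise. $\sigma$ is consistent if the product of $\sigma$ along every directed cycle is $I_d$, and inconsistent otherwise. Two $d$-dimensional signatures satisfy $\sigma\cong\tau$ (switching equivalence) if there is $f:V\to\mathsf{O}(d)$ with $f(i)\sigma_{ij}=\tau_{ij}f(j)$ for all $(i,j)\in E^{\mathrm{or}}$. For a $d$-dimensional signature $\sigma$ and a $d'$-dimensional signature $\sigma'$, the direct sum is $(\sigma\oplus\sigma')_{ij}=\begin{bmatrix}\sigma_{ij}&0\\0&\sigma'_{ij}\end{bmatrix}$.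 $\iota^1$ denotes the $1$-dimensional signature identically equal to $1$. *)

theory Defs
  imports "Jordan_Normal_Form.Matrix_Kernel"
begin

text \<open>Weighted graph on the vertex set {0..<n} (the paper's {1..n}, shifted),
  given by a weight function w; {i,j} is an edge iff w i j > 0.\<close>

definition weighted_graph :: "nat \<Rightarrow> (nat \<Rightarrow> nat \<Rightarrow> real) \<Rightarrow> bool" where
  "weighted_graph n w \<longleftrightarrow>
     (\<forall>i<n. \<forall>j<n. w i j = w j i \<and> w i j \<ge> 0) \<and> (\<forall>i<n. w i i = 0)"

definition adj :: "nat \<Rightarrow> (nat \<Rightarrow> nat \<Rightarrow> real) \<Rightarrow> nat \<Rightarrow> nat \<Rightarrow> bool" where
  "adj n w i j \<longleftrightarrow> i < n \<and> j < n \<and> w i j > 0"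

definition connected_graph :: "nat \<Rightarrow> (nat \<Rightarrow> nat \<Rightarrow> real) \<Rightarrow> bool" where
  "connected_graph n w \<longleftrightarrow> 0 < n \<and> (\<forall>i<n. \<forall>j<n. (adj n w)\<^sup>*\<^sup>* i j)"

definition deg :: "nat \<Rightarrow> (nat \<Rightarrow> nat \<Rightarrow> real) \<Rightarrow> nat \<Rightarrow> real" where
  "deg n w i = (\<Sum>j<n. w i j)"

definition orth_mat :: "nat \<Rightarrow> real mat \<Rightarrow> bool" where
  "orth_mat d A \<longleftrightarrow> A \<in> carrier_mat d d \<and> transpose_mat A * A = 1\<^sub>m d"

definition signature :: "nat \<Rightarrow> (nat \<Rightarrow> nat \<Rightarrow> real) \<Rightarrow> nat \<Rightarrow> (nat \<Rightarrow> nat \<Rightarrow> real mat) \<Rightarrow> bool" where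
  "signature n w d \<sigma> \<longleftrightarrow>
     (\<forall>i j. adj n w i j \<longrightarrow> orth_mat d (\<sigma> i j) \<and> \<sigma> j i = transpose_mat (\<sigma> i j))"

text \<open>Connection Laplacian: nd x nd block matrix, vertex i occupies rows i*d ..< (i+1)*d.\<close>
definition conn_lap :: "nat \<Rightarrow> (nat \<Rightarrow> nat \<Rightarrow> real) \<Rightarrow> nat \<Rightarrow> (nat \<Rightarrow> nat \<Rightarrow> real mat) \<Rightarrow> real mat" where
  "conn_lap n w d \<sigma> = mat (n * d) (n * d) (\<lambda>(r, c).
     let i = r div d; a = r mod d; j = c div d; b = c mod d in
     if i = j then (if a = b then deg n w i else 0)
     else if adj n w i j then - w i j * (\<sigma> i j $$ (a, b)) else 0)"

definition is_cycle :: "nat \<Rightarrow> (nat \<Rightarrow> nat \<Rightarrow> real) \<Rightarrow> nat list \<Rightarrow> bool" where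
  "is_cycle n w vs \<longleftrightarrow> length vs \<ge> 3 \<and> distinct vs \<and>
     (\<forall>(i, j) \<in> set (zip vs (tl vs @ [hd vs])). adj n w i j)"

definition cycle_prod :: "nat \<Rightarrow> (nat \<Rightarrow> nat \<Rightarrow> real mat) \<Rightarrow> nat list \<Rightarrow> real mat" where
  "cycle_prod d \<sigma> vs = foldr (\<lambda>(i, j) M. \<sigma> i j * M) (zip vs (tl vs @ [hd vs])) (1\<^sub>m d)"

definition consistent :: "nat \<Rightarrow> (nat \<Rightarrow> nat \<Rightarrow> real) \<Rightarrow> nat \<Rightarrow> (nat \<Rightarrow> nat \<Rightarrow> real mat) \<Rightarrow> bool" where
  "consistent n w d \<sigma> \<longleftrightarrow> (\<forall>vs. is_cycle n w vs \<longrightarrow> cycle_prod d \<sigma> vs = 1\<^sub>m d)"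

definition switch_equiv :: "nat \<Rightarrow> (nat \<Rightarrow> nat \<Rightarrow> real) \<Rightarrow> nat \<Rightarrow>
    (nat \<Rightarrow> nat \<Rightarrow> real mat) \<Rightarrow> (nat \<Rightarrow> nat \<Rightarrow> real mat) \<Rightarrow> bool" where
  "switch_equiv n w d \<sigma> \<tau> \<longleftrightarrow>
     (\<exists>f. (\<forall>i<n. orth_mat d (f i)) \<and>
          (\<forall>i j. adj n w i j \<longrightarrow> f i * \<sigma> i j = \<tau> i j * f j))"

definition sig_dsum :: "nat \<Rightarrow> nat \<Rightarrow> (nat \<Rightarrow> nat \<Rightarrow> real mat) \<Rightarrow> (nat \<Rightarrow> nat \<Rightarrow> real mat)
    \<Rightarrow> nat \<Rightarrow> nat \<Rightarrow> real mat" where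
  "sig_dsum d d' \<sigma> \<sigma>' i j = four_block_mat (\<sigma> i j) (0\<^sub>m d d') (0\<^sub>m d' d) (\<sigma>' i j)"

definition iota1 :: "nat \<Rightarrow> nat \<Rightarrow> real mat" where
  "iota1 i j = 1\<^sub>m 1"

fun iota_sum :: "nat \<Rightarrow> nat \<Rightarrow> nat \<Rightarrow> real mat" where
  "iota_sum 0 = (\<lambda>i j. 1\<^sub>m 0)"
| "iota_sum (Suc k) = sig_dsum k 1 (iota_sum k) iota1"

end

theory Submission
  imports Defs
begin

definition blk :: "nat \<Rightarrow> real vec \<Rightarrow> nat \<Rightarrow> real vec" where
  "blk d x i = vec d (\<lambda>a. x $ (i*d+a))"

definition glue :: "nat \<Rightarrow> nat \<Rightarrow> (nat \<Rightarrow> real vec) \<Rightarrow> real vec" where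
  "glue n d F = vec (n*d) (\<lambda>r. F (r div d) $ (r mod d))"

definition par :: "nat \<Rightarrow> (nat \<Rightarrow> nat \<Rightarrow> real) \<Rightarrow> nat \<Rightarrow> (nat \<Rightarrow> nat \<Rightarrow> real mat) \<Rightarrow> real vec \<Rightarrow> bool" where
  "par n w d \<sigma> x \<longleftrightarrow> (\<forall>i j. adj n w i j \<longrightarrow> blk d x i = \<sigma> i j *\<^sub>v blk d x j)"

lemma blk_carrier[simp]: "blk d x i \<in> carrier_vec d" and dim_blk[simp]: "dim_vec (blk d x i) = d"
  by (auto simp: blk_def)

lemma blk_index[simp]: "a < d \<Longrightarrow> blk d x i $ a = x $ (i*d+a)"
  by (simp add: blk_def)

lemma glue_carrier[simp]: "glue n d F \<in> carrier_vec (n*d)" and dim_glue[simp]: "dim_vec (glue n d F) = n*d"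
  by (auto simp: glue_def)

lemma idx_lt: "i < n \<Longrightarrow> a < d \<Longrightarrow> i*d+a < n*(d::nat)"
proof -
  assume "i < n" "a < d"
  then have "i*d + a < i*d + d" by simp
  also have "\<dots> = Suc i * d" by simp
  also have "\<dots> \<le> n * d" using \<open>i<n\<close> by (intro mult_right_mono) auto
  finally show ?thesis .
qed

lemma idx_div[simp]: "a < d \<Longrightarrow> (i*d+a) div d = (i::nat)"
  by simp
lemma idx_mod[simp]: "a < d \<Longrightarrow> (i*d+a) mod d = (a::nat)"
  by simp

lemma blk_glue[simp]: "i < n \<Longrightarrow> F i \<in> carrier_vec d \<Longrightarrow> blk d (glue n d F) i = F i"
  by (rule eq_vecI) (auto simp: glue_def idx_lt)

lemma sum_add_split: "(\<Sum>c<m+d. f c) = (\<Sum>c<m. f c) + (\<Sum>a<(d::nat). f (m+a))"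
  by (induction d) (auto simp: add.assoc)

lemma sum_split: "(\<Sum>c<n*d. f c) = (\<Sum>i<n. \<Sum>a<(d::nat). f (i*d+a))"
proof (induction n)
  case 0 then show ?case by simp
next
  case (Suc n)
  have "(\<Sum>c<Suc n*d. f c) = (\<Sum>c<n*d+d. f c)" by (simp add: add.commute)
  also have "\<dots> = (\<Sum>c<n*d. f c) + (\<Sum>a<d. f (n*d+a))" by (rule sum_add_split)
  finally show ?case using Suc by simp
qed

lemma vec_eq_blk: assumes "x \<in> carrier_vec (n*d)" "y \<in> carrier_vec (n*d)" "\<And>i. i < n \<Longrightarrow> blk d x i = blk d y i"
  shows "x = y"
proof (rule eq_vecI)
  show "dim_vec x = dim_vec y" using assms by simp
  fix r assume "r < dim_vec y"
  then have r: "r < n*d" using assms by simp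
  then have d: "d > 0" by (cases d) auto
  have "r div d < n" using r by (simp add: less_mult_imp_div_less)
  moreover have "r mod d < d" using d by simp
  moreover have "r = (r div d)*d + r mod d" by simp
  ultimately show "x $ r = y $ r" using assms(3)[of "r div d"]
    by (metis blk_index)
qed

lemma scalar_prod_split: assumes "x \<in> carrier_vec (n*d)" "y \<in> carrier_vec (n*d)"
  shows "x \<bullet> y = (\<Sum>i<n. blk d x i \<bullet> blk d y i)"
proof -
  have "x \<bullet> y = (\<Sum>c<n*d. x $ c * y $ c)" using assms by (simp add: scalar_prod_def lessThan_atLeast0)
  also have "\<dots> = (\<Sum>i<n. \<Sum>a<d. x $ (i*d+a) * y $ (i*d+a))" by (rule sum_split)
  also have "\<dots> = (\<Sum>i<n. blk d x i \<bullet> blk d y i)"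
    by (intro sum.cong refl) (simp add: scalar_prod_def lessThan_atLeast0)
  finally show ?thesis .
qed

lemma weighted_adj: assumes "weighted_graph n w" "i < n" "j < n" "\<not> adj n w i j" shows "w i j = 0"
  using assms unfolding weighted_graph_def adj_def by force

lemma adj_sym: assumes "weighted_graph n w" "adj n w i j" shows "adj n w j i"
  using assms unfolding weighted_graph_def adj_def by force

lemma adj_irrefl: assumes "weighted_graph n w" shows "\<not> adj n w i i"
  using assms unfolding weighted_graph_def adj_def by force

lemma sig_carrier: "signature n w d \<sigma> \<Longrightarrow> adj n w i j \<Longrightarrow> \<sigma> i j \<in> carrier_mat d d"
  unfolding signature_def orth_mat_def by blast

lemma lap_entry:
  assumes wg: "weighted_graph n w" and sg: "signature n w d \<sigma>"
    and i: "i < n" and a: "a < d" and x: "x \<in> carrier_vec (n*d)"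
  shows "(conn_lap n w d \<sigma> *\<^sub>v x) $ (i*d+a) =
     (\<Sum>j<n. if adj n w i j then w i j * (x $ (i*d+a) - (\<sigma> i j *\<^sub>v blk d x j) $ a) else 0)"
proof -
  let ?L = "conn_lap n w d \<sigma>"
  have ia: "i*d+a < n*d" using idx_lt[OF i a] .
  have "(?L *\<^sub>v x) $ (i*d+a) = (\<Sum>c<n*d. ?L $$ (i*d+a, c) * x $ c)"
    using ia x by (simp add: conn_lap_def scalar_prod_def lessThan_atLeast0 row_def)
  also have "\<dots> = (\<Sum>j<n. \<Sum>b<d. ?L $$ (i*d+a, j*d+b) * x $ (j*d+b))" by (rule sum_split)
  also have "\<dots> = (\<Sum>j<n. (if j = i then deg n w i * x $ (i*d+a) else 0)
       + (if adj n w i j then - w i j * (\<sigma> i j *\<^sub>v blk d x j) $ a else 0))"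
  proof (intro sum.cong refl)
    fix j assume j: "j \<in> {..<n}"
    have ent: "?L $$ (i*d+a, j*d+b) = (if i = j then (if a = b then deg n w i else 0)
       else if adj n w i j then - w i j * (\<sigma> i j $$ (a, b)) else 0)" if "b < d" for b
      using ia idx_lt[of j n b d] j that a by (simp add: conn_lap_def Let_def)
    show "(\<Sum>b<d. ?L $$ (i*d+a, j*d+b) * x $ (j*d+b)) = (if j = i then deg n w i * x $ (i*d+a) else 0)
       + (if adj n w i j then - w i j * (\<sigma> i j *\<^sub>v blk d x j) $ a else 0)"
    proof (cases "j = i")
      case True
      have ent': "?L $$ (i*d+a, i*d+b) = (if a = b then deg n w i else 0)" if "b < d" for b
        using ent[OF that] True by simp
      have "(\<Sum>b<d. ?L $$ (i*d+a, j*d+b) * x $ (j*d+b)) = (\<Sum>b<d. (if b = a then deg n w i * x $ (i*d+a) else 0))"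
        unfolding True by (intro sum.cong refl) (auto simp: ent')
      also have "\<dots> = deg n w i * x $ (i*d+a)" using a by simp
      finally show ?thesis using True adj_irrefl[OF wg] by simp
    next
      case False
      show ?thesis
      proof (cases "adj n w i j")
        case True
        have sc: "\<sigma> i j \<in> carrier_mat d d" using sig_carrier[OF sg True] .
        have "(\<sigma> i j *\<^sub>v blk d x j) $ a = (\<Sum>b<d. \<sigma> i j $$ (a,b) * x $ (j*d+b))"
          using sc a by (simp add: scalar_prod_def lessThan_atLeast0 row_def)
        then show ?thesis using False True ent
          by (simp add: sum_distrib_left mult.assoc)
      next
        case nadj: False
        then show ?thesis using False ent by simp
      qed
    qed
  qed
  also have "\<dots> = deg n w i * x $ (i*d+a) + (\<Sum>j<n. if adj n w i j then - w i j * (\<sigma> i j *\<^sub>v blk d x j) $ a else 0)"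
    using i by (simp add: sum.distrib)
  also have "deg n w i = (\<Sum>j<n. if adj n w i j then w i j else 0)"
    unfolding deg_def using weighted_adj[OF wg i] by (intro sum.cong) auto
  also have "(\<Sum>j<n. if adj n w i j then w i j else 0) * x $ (i*d+a) + (\<Sum>j<n. if adj n w i j then - w i j * (\<sigma> i j *\<^sub>v blk d x j) $ a else 0)
     = (\<Sum>j<n. if adj n w i j then w i j * (x $ (i*d+a) - (\<sigma> i j *\<^sub>v blk d x j) $ a) else 0)"
    unfolding sum_distrib_right sum.distrib[symmetric] by (intro sum.cong) (auto simp: algebra_simps)
  finally show ?thesis .
qed

lemma orth_carrier: "orth_mat d A \<Longrightarrow> A \<in> carrier_mat d d" unfolding orth_mat_def by simp
lemma orth_TA: "orth_mat d A \<Longrightarrow> transpose_mat A * A = 1\<^sub>m d" unfolding orth_mat_def by simp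
lemma orth_AT: "orth_mat d A \<Longrightarrow> A * transpose_mat A = 1\<^sub>m d"
  unfolding orth_mat_def using mat_mult_left_right_inverse[of "transpose_mat A" d A] by auto
lemma orth_transpose: "orth_mat d A \<Longrightarrow> orth_mat d (transpose_mat A)"
  using orth_AT[of d A] unfolding orth_mat_def by auto
lemma orth_one: "orth_mat d (1\<^sub>m d)" unfolding orth_mat_def by simp
lemma orth_mult: assumes "orth_mat d A" "orth_mat d B" shows "orth_mat d (A * B)"
proof -
  have A: "A \<in> carrier_mat d d" and B: "B \<in> carrier_mat d d" using assms orth_carrier by auto
  have "transpose_mat (A * B) * (A * B) = (transpose_mat B * transpose_mat A) * (A * B)"
    using A B by (simp add: transpose_mult[OF A B])
  also have "\<dots> = transpose_mat B * (transpose_mat A * (A * B))"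
    by (rule assoc_mult_mat) (use A B in auto)
  also have "transpose_mat A * (A * B) = (transpose_mat A * A) * B"
    by (rule assoc_mult_mat[symmetric]) (use A B in auto)
  also have "transpose_mat B * ((transpose_mat A * A) * B) = 1\<^sub>m d" using orth_TA[OF assms(1)] orth_TA[OF assms(2)] B by simp
  finally show ?thesis using A B unfolding orth_mat_def by auto
qed

lemma orth_TA_vec: assumes "orth_mat d A" "v \<in> carrier_vec d" shows "transpose_mat A *\<^sub>v (A *\<^sub>v v) = v"
proof -
  have A: "A \<in> carrier_mat d d" using orth_carrier[OF assms(1)] .
  have "transpose_mat A *\<^sub>v (A *\<^sub>v v) = (transpose_mat A * A) *\<^sub>v v"
    by (rule assoc_mult_mat_vec[symmetric]) (use A assms in auto)
  then show ?thesis using orth_TA[OF assms(1)] assms by simp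
qed
lemma orth_AT_vec: assumes "orth_mat d A" "v \<in> carrier_vec d" shows "A *\<^sub>v (transpose_mat A *\<^sub>v v) = v"
proof -
  have A: "A \<in> carrier_mat d d" using orth_carrier[OF assms(1)] .
  have "A *\<^sub>v (transpose_mat A *\<^sub>v v) = (A * transpose_mat A) *\<^sub>v v"
    by (rule assoc_mult_mat_vec[symmetric]) (use A assms in auto)
  then show ?thesis using orth_AT[OF assms(1)] assms by simp
qed

lemma orth_scalar: assumes "orth_mat d A" "u \<in> carrier_vec d" "v \<in> carrier_vec d"
  shows "(A *\<^sub>v u) \<bullet> (A *\<^sub>v v) = u \<bullet> v"
proof -
  have A: "A \<in> carrier_mat d d" using assms orth_carrier by auto
  have "(A *\<^sub>v u) \<bullet> (A *\<^sub>v v) = (transpose_mat A *\<^sub>v (A *\<^sub>v u)) \<bullet> v"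
    using transpose_vec_mult_scalar[OF A assms(3), of "A *\<^sub>v u"] A assms by simp
  also have "\<dots> = u \<bullet> v" using orth_TA_vec[OF assms(1,2)] by simp
  finally show ?thesis .
qed

lemma transp_scalar: assumes "(A :: real mat) \<in> carrier_mat d d" "u \<in> carrier_vec d" "v \<in> carrier_vec d"
  shows "u \<bullet> (transpose_mat A *\<^sub>v v) = (A *\<^sub>v u) \<bullet> v"
proof -
  have "u \<bullet> (transpose_mat A *\<^sub>v v) = (transpose_mat A *\<^sub>v v) \<bullet> u"
    by (rule comm_scalar_prod[where n=d]) (use assms in auto)
  also have "\<dots> = v \<bullet> (A *\<^sub>v u)" using transpose_vec_mult_scalar[OF assms(1) assms(2) assms(3)] .
  also have "\<dots> = (A *\<^sub>v u) \<bullet> v" by (rule comm_scalar_prod[where n=d]) (use assms in auto)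
  finally show ?thesis .
qed

lemma self_scalar_nonneg: "(v :: real vec) \<bullet> v \<ge> 0"
  unfolding scalar_prod_def by (intro sum_nonneg) auto

lemma self_scalar_zero: assumes "(v :: real vec) \<in> carrier_vec d" "v \<bullet> v = 0" shows "v = 0\<^sub>v d"
proof (rule eq_vecI)
  fix a assume "a < dim_vec (0\<^sub>v d)"
  then have a: "a < d" by simp
  have "(\<Sum>b\<in>{0..<d}. v $ b * v $ b) = 0" using assms unfolding scalar_prod_def by simp
  then have "\<forall>b\<in>{0..<d}. v $ b * v $ b = 0" by (subst (asm) sum_nonneg_eq_0_iff) auto
  then show "v $ a = 0\<^sub>v d $ a" using a by auto
qed (use assms in auto)

lemma sig_orth: "signature n w d \<sigma> \<Longrightarrow> adj n w i j \<Longrightarrow> orth_mat d (\<sigma> i j)"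
  unfolding signature_def by blast
lemma sig_transp: "signature n w d \<sigma> \<Longrightarrow> adj n w i j \<Longrightarrow> \<sigma> j i = transpose_mat (\<sigma> i j)"
  unfolding signature_def by blast

lemma adj_lt: "adj n w i j \<Longrightarrow> i < n \<and> j < n" unfolding adj_def by simp

lemma lap_carrier: "conn_lap n w d \<sigma> \<in> carrier_mat (n*d) (n*d)"
  unfolding conn_lap_def by simp

lemma par_imp_kernel:
  assumes wg: "weighted_graph n w" and sg: "signature n w d \<sigma>"
    and x: "x \<in> carrier_vec (n*d)" and p: "par n w d \<sigma> x"
  shows "conn_lap n w d \<sigma> *\<^sub>v x = 0\<^sub>v (n*d)"
proof (rule vec_eq_blk[of _ n d])
  show "conn_lap n w d \<sigma> *\<^sub>v x \<in> carrier_vec (n*d)" by (rule mult_mat_vec_carrier[OF lap_carrier x])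
  fix i assume i: "i < n"
  show "blk d (conn_lap n w d \<sigma> *\<^sub>v x) i = blk d (0\<^sub>v (n * d)) i"
  proof (rule eq_vecI)
    fix a assume "a < dim_vec (blk d (0\<^sub>v (n * d)) i)"
    then have a: "a < d" by simp
    have "(conn_lap n w d \<sigma> *\<^sub>v x) $ (i*d+a) = 0"
      unfolding lap_entry[OF wg sg i a x]
    proof (intro sum.neutral ballI)
      fix j assume "j \<in> {..<n}"
      show "(if adj n w i j then w i j * (x $ (i*d+a) - (\<sigma> i j *\<^sub>v blk d x j) $ a) else 0) = 0"
      proof (cases "adj n w i j")
        case True
        then have "blk d x i = \<sigma> i j *\<^sub>v blk d x j" using p unfolding par_def by blast
        then have "x $ (i*d+a) = (\<sigma> i j *\<^sub>v blk d x j) $ a" using blk_index[OF a, of x i] by simp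
        then show ?thesis by simp
      qed simp
    qed
    then show "blk d (conn_lap n w d \<sigma> *\<^sub>v x) i $ a = blk d (0\<^sub>v (n * d)) i $ a"
      using a idx_lt[OF i a] by simp
  qed simp
qed simp

lemma kernel_imp_par:
  assumes wg: "weighted_graph n w" and sg: "signature n w d \<sigma>"
    and x: "x \<in> carrier_vec (n*d)" and k: "conn_lap n w d \<sigma> *\<^sub>v x = 0\<^sub>v (n*d)"
  shows "par n w d \<sigma> x"
proof -
  define X where "X i = blk d x i" for i
  define S where "S i j = \<sigma> i j *\<^sub>v X j" for i j
  have XC[simp]: "X i \<in> carrier_vec d" for i unfolding X_def by simp
  have XD[simp]: "dim_vec (X i) = d" for i unfolding X_def by simp
  have SC: "S i j \<in> carrier_vec d" if "adj n w i j" for i j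
    unfolding S_def using sig_carrier[OF sg that] by simp
  define T where "T i j = (if adj n w i j then w i j * (X i \<bullet> X i - X i \<bullet> S i j) else 0)" for i j
  have row0: "(\<Sum>j<n. T i j) = 0" if i: "i < n" for i
  proof -
    have "0 = (\<Sum>a<d. X i $ a * (conn_lap n w d \<sigma> *\<^sub>v x) $ (i*d+a))"
      using k idx_lt[OF i] by simp
    also have "\<dots> = (\<Sum>a<d. \<Sum>j<n. X i $ a * (if adj n w i j then w i j * (X i $ a - S i j $ a) else 0))"
    proof (intro sum.cong refl)
      fix a assume "a \<in> {..<d}"
      then have a: "a < d" by simp
      have "(conn_lap n w d \<sigma> *\<^sub>v x) $ (i*d+a) = (\<Sum>j<n. if adj n w i j then w i j * (X i $ a - S i j $ a) else 0)"
        using lap_entry[OF wg sg i a x] unfolding X_def S_def blk_index[OF a] .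
      then show "X i $ a * (conn_lap n w d \<sigma> *\<^sub>v x) $ (i*d+a) = (\<Sum>j<n. X i $ a * (if adj n w i j then w i j * (X i $ a - S i j $ a) else 0))"
        by (simp add: sum_distrib_left)
    qed
    also have "\<dots> = (\<Sum>j<n. \<Sum>a<d. X i $ a * (if adj n w i j then w i j * (X i $ a - S i j $ a) else 0))"
      by (rule sum.swap)
    also have "\<dots> = (\<Sum>j<n. T i j)"
    proof (intro sum.cong refl)
      fix j assume "j \<in> {..<n}"
      show "(\<Sum>a<d. X i $ a * (if adj n w i j then w i j * (X i $ a - S i j $ a) else 0)) = T i j"
      proof (cases "adj n w i j")
        case True
        then show ?thesis using SC[OF True] unfolding T_def
          by (simp add: scalar_prod_def lessThan_atLeast0 sum_distrib_left algebra_simps sum_subtractf)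
      qed (simp add: T_def)
    qed
    finally show ?thesis by simp
  qed
  have S1: "(\<Sum>i<n. \<Sum>j<n. T i j) = 0" using row0 by simp
  define T2 where "T2 i j = (if adj n w i j then w i j * (X j \<bullet> X j - X i \<bullet> S i j) else 0)" for i j
  have "(\<Sum>i<n. \<Sum>j<n. T2 i j) = (\<Sum>j<n. \<Sum>i<n. T2 i j)" by (rule sum.swap)
  also have "\<dots> = (\<Sum>j<n. \<Sum>i<n. T j i)"
  proof (intro sum.cong refl)
    fix i j assume "i \<in> {..<n}" "j \<in> {..<n}"
    show "T2 i j = T j i"
    proof (cases "adj n w i j")
      case True
      then have ji: "adj n w j i" using adj_sym[OF wg] by blast
      have wji: "w j i = w i j" using wg adj_lt[OF True] unfolding weighted_graph_def by auto
      have sc: "\<sigma> i j \<in> carrier_mat d d" using sig_carrier[OF sg True] .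
      have "X j \<bullet> S j i = X i \<bullet> S i j"
        unfolding S_def sig_transp[OF sg True] transp_scalar[OF sc XC XC]
        by (rule comm_scalar_prod[where n=d]) (use sc in auto)
      then show ?thesis unfolding T2_def T_def using True ji wji by simp
    next
      case False
      then have "\<not> adj n w j i" using adj_sym[OF wg] by blast
      then show ?thesis using False unfolding T2_def T_def by simp
    qed
  qed
  finally have S2: "(\<Sum>i<n. \<Sum>j<n. T2 i j) = 0" using S1 by simp
  define E where "E i j = (if adj n w i j then w i j * ((X i - S i j) \<bullet> (X i - S i j)) else 0)" for i j
  have ETT: "E i j = T i j + T2 i j" for i j
  proof (cases "adj n w i j")
    case True
    have orth: "S i j \<bullet> S i j = X j \<bullet> X j" unfolding S_def using orth_scalar[OF sig_orth[OF sg True]] by simp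
    have c1: "S i j \<bullet> X i = X i \<bullet> S i j" using SC[OF True] by (intro comm_scalar_prod[where n=d]) auto
    have "(X i - S i j) \<bullet> (X i - S i j) = X i \<bullet> X i - X i \<bullet> S i j - (S i j \<bullet> X i - S i j \<bullet> S i j)"
      using SC[OF True] by (simp add: minus_scalar_prod_distrib[where n=d] scalar_prod_minus_distrib[where n=d])
    then have eq: "(X i - S i j) \<bullet> (X i - S i j) = (X i \<bullet> X i - X i \<bullet> S i j) + (X j \<bullet> X j - X i \<bullet> S i j)"
      using orth c1 by simp
    have "E i j = w i j * ((X i \<bullet> X i - X i \<bullet> S i j) + (X j \<bullet> X j - X i \<bullet> S i j))"
      using True eq by (simp add: E_def)
    moreover have "T i j + T2 i j = w i j * ((X i \<bullet> X i - X i \<bullet> S i j) + (X j \<bullet> X j - X i \<bullet> S i j))"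
      using True unfolding T_def T2_def by (simp only: if_True distrib_left)
    ultimately show ?thesis by simp
  qed (simp add: E_def T_def T2_def)
  have "(\<Sum>i<n. \<Sum>j<n. E i j) = 0" unfolding ETT sum.distrib S1 S2 by simp
  moreover have Enn: "E i j \<ge> 0" for i j
    unfolding E_def using self_scalar_nonneg wg unfolding adj_def by auto
  ultimately have "\<forall>i\<in>{..<n}. (\<Sum>j<n. E i j) = 0"
    by (subst (asm) sum_nonneg_eq_0_iff) (auto intro: sum_nonneg)
  then have E0: "\<And>i j. i < n \<Longrightarrow> j < n \<Longrightarrow> E i j = 0"
    using Enn by (simp add: sum_nonneg_eq_0_iff)
  show ?thesis unfolding par_def
  proof (intro allI impI)
    fix i j assume a: "adj n w i j"
    then have "w i j > 0" unfolding adj_def by simp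
    then have "(X i - S i j) \<bullet> (X i - S i j) = 0" using E0[of i j] adj_lt[OF a] a unfolding E_def by simp
    then have z: "X i - S i j = 0\<^sub>v d" by (rule self_scalar_zero[rotated]) (use SC[OF a] in simp)
    have "X i = S i j"
    proof (rule eq_vecI)
      fix b assume "b < dim_vec (S i j)"
      then have b: "b < d" using SC[OF a] by simp
      have "(X i - S i j) $ b = 0" using z b by simp
      then show "X i $ b = S i j $ b" using b SC[OF a] by simp
    qed (use SC[OF a] in simp)
    then show "blk d x i = \<sigma> i j *\<^sub>v blk d x j" unfolding X_def S_def .
  qed
qed

definition hh :: "nat \<Rightarrow> real vec \<Rightarrow> real mat" where
  "hh D u = mat D D (\<lambda>(a,b). (if a = b then 1 else 0)
      - (2 / ((u - unit_vec D 0) \<bullet> (u - unit_vec D 0))) * (u - unit_vec D 0) $ a * (u - unit_vec D 0) $ b)"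

lemma hh_carrier: "hh D u \<in> carrier_mat D D" unfolding hh_def by simp

lemma hh_sym: "transpose_mat (hh D u) = hh D u"
proof (rule eq_matI)
  fix i j assume "i < dim_row (hh D u)" "j < dim_col (hh D u)"
  then have "i < D" "j < D" using hh_carrier[of D u] by auto
  then show "transpose_mat (hh D u) $$ (i, j) = hh D u $$ (i, j)"
    unfolding hh_def by (simp add: mult.commute)
qed (use hh_carrier[of D u] in auto)

lemma hh_sq: assumes u: "u \<in> carrier_vec D"
  shows "hh D u * hh D u = 1\<^sub>m D"
proof -
  define y where "y = u - unit_vec D 0"
  define c where "c = 2 / (y \<bullet> y)"
  have yC: "y \<in> carrier_vec D" unfolding y_def using u by simp
  have H: "hh D u = mat D D (\<lambda>(a,b). (if a = b then 1 else 0) - c * y $ a * y $ b)"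
    unfolding hh_def y_def c_def by simp
  have yy: "y \<bullet> y = (\<Sum>k<D. y $ k * y $ k)" using yC by (simp add: scalar_prod_def lessThan_atLeast0)
  have cc: "c * c * (y \<bullet> y) - 2 * c = 0"
  proof (cases "y \<bullet> y = 0")
    case True then show ?thesis unfolding c_def by simp
  next
    case False then show ?thesis unfolding c_def by (simp add: field_simps power2_eq_square)
  qed
  show ?thesis
  proof (rule eq_matI)
    fix a b assume a: "a < dim_row (1\<^sub>m D)" and b: "b < dim_col (1\<^sub>m D)"
    then have a: "a < D" and b: "b < D" by auto
    have pt: "((if a = k then 1 else 0) - c * y $ a * y $ k) * ((if k = b then 1 else 0) - c * y $ k * y $ b)
      = (if k = a then (if a = b then 1 else 0) - c * y $ a * y $ b else 0) + (if k = b then - c * y $ a * y $ b else 0)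
        + c * c * y $ a * y $ b * (y $ k * y $ k)" for k
      by (cases "k = a"; cases "k = b") (auto simp: algebra_simps)
    have "(hh D u * hh D u) $$ (a, b) = (\<Sum>k<D. ((if a = k then 1 else 0) - c * y $ a * y $ k) * ((if k = b then 1 else 0) - c * y $ k * y $ b))"
      unfolding H using a b by (simp add: scalar_prod_def lessThan_atLeast0 row_def col_def)
    also have "\<dots> = (if a = b then 1 else 0) - c * y $ a * y $ b - c * y $ a * y $ b + c * c * y $ a * y $ b * (y \<bullet> y)"
      unfolding pt sum.distrib yy using a b by (simp add: sum_distrib_left)
    also have "\<dots> = (if a = b then 1 else 0) + (c * c * (y \<bullet> y) - 2 * c) * y $ a * y $ b"
      by (simp add: algebra_simps)
    also have "\<dots> = 1\<^sub>m D $$ (a, b)" using cc a b by simp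
    finally show "(hh D u * hh D u) $$ (a, b) = 1\<^sub>m D $$ (a, b)" .
  qed (use hh_carrier[of D u] in auto)
qed

lemma hh_orth: "u \<in> carrier_vec D \<Longrightarrow> orth_mat D (hh D u)"
  unfolding orth_mat_def hh_sym using hh_sq hh_carrier by auto

lemma hh_u: assumes u: "u \<in> carrier_vec D" and uu: "u \<bullet> u = 1" and D: "0 < D"
  shows "hh D u *\<^sub>v u = unit_vec D 0"
proof -
  define y where "y = u - unit_vec D 0"
  define c where "c = 2 / (y \<bullet> y)"
  have yC: "y \<in> carrier_vec D" unfolding y_def using u by simp
  have H: "hh D u = mat D D (\<lambda>(a,b). (if a = b then 1 else 0) - c * y $ a * y $ b)"
    unfolding hh_def y_def c_def by simp
  have eC: "unit_vec D 0 \<in> carrier_vec D" by simp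
  have ue: "u \<bullet> unit_vec D 0 = u $ 0" using D by simp
  have eu: "unit_vec D 0 \<bullet> u = u $ 0" using D u by simp
  have ee: "unit_vec D 0 \<bullet> unit_vec D 0 = (1::real)" using D by simp
  have yu: "y \<bullet> u = 1 - u $ 0"
    unfolding y_def minus_scalar_prod_distrib[OF u eC u] eu uu ..
  have "y \<bullet> y = u \<bullet> y - unit_vec D 0 \<bullet> y"
    unfolding y_def[of] by (rule minus_scalar_prod_distrib[OF u eC]) (use yC y_def in simp)
  also have "u \<bullet> y = u \<bullet> u - u \<bullet> unit_vec D 0"
    unfolding y_def by (rule scalar_prod_minus_distrib[OF u u eC])
  also have "unit_vec D 0 \<bullet> y = unit_vec D 0 \<bullet> u - unit_vec D 0 \<bullet> unit_vec D 0"
    unfolding y_def by (rule scalar_prod_minus_distrib[OF eC u eC])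
  finally have yy: "y \<bullet> y = 2 - 2 * u $ 0" unfolding uu ue eu ee by simp
  have ent: "(hh D u *\<^sub>v u) $ a = u $ a - c * y $ a * (y \<bullet> u)" if a: "a < D" for a
  proof -
    have "(hh D u *\<^sub>v u) $ a = (\<Sum>k<D. ((if a = k then 1 else 0) - c * y $ a * y $ k) * u $ k)"
      unfolding H using a u by (simp add: scalar_prod_def lessThan_atLeast0 row_def)
    also have "\<dots> = (\<Sum>k<D. (if k = a then u $ k else 0) - c * y $ a * (y $ k * u $ k))"
      by (intro sum.cong refl) (auto simp: algebra_simps)
    also have "\<dots> = (\<Sum>k<D. (if k = a then u $ k else 0)) - c * y $ a * (\<Sum>k<D. y $ k * u $ k)"
      by (simp only: sum_subtractf sum_distrib_left)
    also have "(\<Sum>k<D. y $ k * u $ k) = y \<bullet> u" using u by (simp add: scalar_prod_def lessThan_atLeast0)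
    finally show ?thesis using a by simp
  qed
  show ?thesis
  proof (rule eq_vecI)
    fix a assume "a < dim_vec (unit_vec D 0)"
    then have a: "a < D" by simp
    show "(hh D u *\<^sub>v u) $ a = unit_vec D 0 $ a"
    proof (cases "y \<bullet> y = 0")
      case True
      then have "y = 0\<^sub>v D" using self_scalar_zero[OF yC] by simp
      then have "y $ a = 0" using a by simp
      then have "u $ a = unit_vec D 0 $ a" unfolding y_def using a u by simp
      moreover have "c = 0" unfolding c_def using True by simp
      ultimately show ?thesis using ent[OF a] by simp
    next
      case False
      then have "c * (y \<bullet> u) = 1" unfolding c_def yu using yy by (simp add: field_simps)
      then have "(hh D u *\<^sub>v u) $ a = u $ a - y $ a" using ent[OF a] by (simp add: mult.assoc)
      then show ?thesis unfolding y_def using a u by simp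
    qed
  qed (use hh_carrier[of D u] u in auto)
qed

definition subsp :: "nat \<Rightarrow> real vec set \<Rightarrow> bool" where
  "subsp d U \<longleftrightarrow> U \<subseteq> carrier_vec d \<and> 0\<^sub>v d \<in> U \<and> (\<forall>u\<in>U. \<forall>v\<in>U. u + v \<in> U) \<and> (\<forall>c. \<forall>u\<in>U. c \<cdot>\<^sub>v u \<in> U)"

lemma vCons_split: assumes z: "(z :: real vec) \<in> carrier_vec (Suc d)"
  shows "vCons 0 (vec d (\<lambda>b. z $ Suc b)) = z + (- (z $ 0)) \<cdot>\<^sub>v unit_vec (Suc d) 0"
proof (rule eq_vecI)
  fix i assume "i < dim_vec (z + (- (z $ 0)) \<cdot>\<^sub>v unit_vec (Suc d) 0)"
  then have i: "i < Suc d" using z by simp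
  show "vCons 0 (vec d (\<lambda>b. z $ Suc b)) $ i = (z + (- (z $ 0)) \<cdot>\<^sub>v unit_vec (Suc d) 0) $ i"
    using i z by (cases i) auto
qed (use z in simp)

lemma vCons_add: "s \<in> carrier_vec d \<Longrightarrow> t \<in> carrier_vec d \<Longrightarrow> vCons (0::real) (s + t) = vCons 0 s + vCons 0 t"
  by (rule eq_vecI) (auto simp: vec_index_vCons)

lemma vCons_smult: "vCons (0::real) (c \<cdot>\<^sub>v t) = c \<cdot>\<^sub>v vCons 0 t"
  by (rule eq_vecI) (auto simp: vec_index_vCons)

definition ext1 :: "nat \<Rightarrow> real mat \<Rightarrow> real mat" where
  "ext1 d Q = mat (Suc d) (Suc d) (\<lambda>(a,b). if a = 0 then (if b = 0 then 1 else 0) else if b = 0 then 0 else Q $$ (a-1, b-1))"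

lemma ext1_carrier: "ext1 d Q \<in> carrier_mat (Suc d) (Suc d)" unfolding ext1_def by simp

lemma ext1_orth: assumes "orth_mat d Q" shows "orth_mat (Suc d) (ext1 d Q)"
proof -
  have Q: "Q \<in> carrier_mat d d" using orth_carrier[OF assms] .
  have QQ: "transpose_mat Q * Q = 1\<^sub>m d" using orth_TA[OF assms] .
  have "transpose_mat (ext1 d Q) * ext1 d Q = 1\<^sub>m (Suc d)"
  proof (rule eq_matI)
    fix a b assume "a < dim_row (1\<^sub>m (Suc d))" "b < dim_col (1\<^sub>m (Suc d))"
    then have a: "a < Suc d" and b: "b < Suc d" by auto
    have "(transpose_mat (ext1 d Q) * ext1 d Q) $$ (a, b) = (\<Sum>k<Suc d. ext1 d Q $$ (k, a) * ext1 d Q $$ (k, b))"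
      using a b ext1_carrier[of d Q] by (simp add: scalar_prod_def lessThan_atLeast0 row_def col_def)
    also have "\<dots> = ext1 d Q $$ (0, a) * ext1 d Q $$ (0, b) + (\<Sum>k<d. ext1 d Q $$ (Suc k, a) * ext1 d Q $$ (Suc k, b))"
      by (rule sum.lessThan_Suc_shift)
    also have "\<dots> = 1\<^sub>m (Suc d) $$ (a, b)"
    proof (cases a)
      case 0
      then show ?thesis using b unfolding ext1_def by (cases b) auto
    next
      case (Suc a')
      note a' = this
      show ?thesis
      proof (cases b)
        case 0
        then show ?thesis using a unfolding ext1_def a' by simp
      next
        case (Suc b')
        have "(\<Sum>k<d. ext1 d Q $$ (Suc k, a) * ext1 d Q $$ (Suc k, b)) = (\<Sum>k<d. Q $$ (k, a') * Q $$ (k, b'))"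
          using a b unfolding ext1_def a' Suc by (intro sum.cong refl) auto
        also have "\<dots> = (transpose_mat Q * Q) $$ (a', b')"
          using a b Q unfolding a' Suc by (simp add: scalar_prod_def lessThan_atLeast0 row_def col_def)
        also have "\<dots> = (if a' = b' then 1 else 0)" using QQ a b unfolding a' Suc by simp
        finally show ?thesis using a b unfolding ext1_def a' Suc by simp
      qed
    qed
    finally show "(transpose_mat (ext1 d Q) * ext1 d Q) $$ (a, b) = 1\<^sub>m (Suc d) $$ (a, b)" .
  qed (use ext1_carrier[of d Q] in auto)
  then show ?thesis unfolding orth_mat_def using ext1_carrier by auto
qed

lemma ext1_mult: assumes Q: "Q \<in> carrier_mat d d" and z: "z \<in> carrier_vec (Suc d)" and k: "k < d"
  shows "(ext1 d Q *\<^sub>v z) $ Suc k = (Q *\<^sub>v vec d (\<lambda>b. z $ Suc b)) $ k"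
proof -
  have "(ext1 d Q *\<^sub>v z) $ Suc k = (\<Sum>b<Suc d. ext1 d Q $$ (Suc k, b) * z $ b)"
    using k z ext1_carrier[of d Q] by (simp add: scalar_prod_def lessThan_atLeast0 row_def)
  also have "\<dots> = ext1 d Q $$ (Suc k, 0) * z $ 0 + (\<Sum>b<d. ext1 d Q $$ (Suc k, Suc b) * z $ Suc b)"
    by (rule sum.lessThan_Suc_shift)
  also have "\<dots> = (\<Sum>b<d. Q $$ (k, b) * z $ Suc b)"
    using k unfolding ext1_def by simp
  also have "\<dots> = (Q *\<^sub>v vec d (\<lambda>b. z $ Suc b)) $ k"
    using k Q by (simp add: scalar_prod_def lessThan_atLeast0 row_def)
  finally show ?thesis .
qed

lemma subsp_sub: assumes "subsp d U" "u \<in> U" "v \<in> U" "c1 = c1" shows "u + c \<cdot>\<^sub>v v \<in> U"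
  using assms unfolding subsp_def by blast

lemma subspace_decomp:
  "subsp d U \<Longrightarrow> \<exists>Q r. orth_mat d Q \<and> r \<le> d \<and>
     (\<forall>v\<in>carrier_vec d. v \<in> U \<longleftrightarrow> (\<forall>k. r \<le> k \<longrightarrow> k < d \<longrightarrow> (Q *\<^sub>v v) $ k = 0))"
proof (induction d arbitrary: U)
  case 0
  have "v \<in> U" if "v \<in> carrier_vec 0" for v
  proof -
    have "v = 0\<^sub>v 0" using that by (intro eq_vecI) auto
    then show ?thesis using 0 unfolding subsp_def by simp
  qed
  then show ?case using orth_one[of 0] by (intro exI[of _ "1\<^sub>m 0"] exI[of _ 0]) auto
next
  case (Suc d)
  let ?D = "Suc d"
  have UC: "U \<subseteq> carrier_vec ?D" and U0: "0\<^sub>v ?D \<in> U"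
    and Uadd: "\<And>u v. u \<in> U \<Longrightarrow> v \<in> U \<Longrightarrow> u + v \<in> U"
    and Usm: "\<And>c u. u \<in> U \<Longrightarrow> c \<cdot>\<^sub>v u \<in> U"
    using Suc.prems unfolding subsp_def by auto
  show ?case
  proof (cases "U \<subseteq> {0\<^sub>v ?D}")
    case True
    have "v \<in> U \<longleftrightarrow> (\<forall>k. 0 \<le> k \<longrightarrow> k < ?D \<longrightarrow> (1\<^sub>m ?D *\<^sub>v v) $ k = 0)" if v: "v \<in> carrier_vec ?D" for v
    proof
      assume "v \<in> U"
      then have "v = 0\<^sub>v ?D" using True by auto
      then show "\<forall>k. 0 \<le> k \<longrightarrow> k < ?D \<longrightarrow> (1\<^sub>m ?D *\<^sub>v v) $ k = 0" by simp
    next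
      assume "\<forall>k. 0 \<le> k \<longrightarrow> k < ?D \<longrightarrow> (1\<^sub>m ?D *\<^sub>v v) $ k = 0"
      then have "v = 0\<^sub>v ?D" using v by (intro eq_vecI) auto
      then show "v \<in> U" using U0 by simp
    qed
    then show ?thesis using orth_one[of ?D] by (intro exI[of _ "1\<^sub>m ?D"] exI[of _ 0]) auto
  next
    case False
    then obtain u0 where u0U: "u0 \<in> U" and u0nz: "u0 \<noteq> 0\<^sub>v ?D" by auto
    have u0C: "u0 \<in> carrier_vec ?D" using UC u0U by auto
    define nr where "nr = u0 \<bullet> u0"
    have nrpos: "nr > 0"
    proof -
      have "nr \<ge> 0" unfolding nr_def by (rule self_scalar_nonneg)
      moreover have "nr \<noteq> 0" using self_scalar_zero[OF u0C] u0nz unfolding nr_def by auto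
      ultimately show ?thesis by simp
    qed
    define u where "u = (1 / sqrt nr) \<cdot>\<^sub>v u0"
    have uU: "u \<in> U" unfolding u_def using Usm u0U by simp
    have uC: "u \<in> carrier_vec ?D" unfolding u_def using u0C by simp
    have uu: "u \<bullet> u = 1"
    proof -
      have "u \<bullet> u = (1 / sqrt nr) * ((1 / sqrt nr) * nr)"
        unfolding u_def nr_def using u0C by simp
      also have "\<dots> = 1" using nrpos by (simp add: field_simps)
      finally show ?thesis .
    qed
    define H where "H = hh ?D u"
    have HC: "H \<in> carrier_mat ?D ?D" unfolding H_def by (rule hh_carrier)
    have HH: "H * H = 1\<^sub>m ?D" unfolding H_def by (rule hh_sq[OF uC])
    have Horth: "orth_mat ?D H" unfolding H_def by (rule hh_orth[OF uC])
    have Hu: "H *\<^sub>v u = unit_vec ?D 0" unfolding H_def by (rule hh_u[OF uC uu]) simp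
    have HHv: "H *\<^sub>v (H *\<^sub>v v) = v" if "v \<in> carrier_vec ?D" for v
    proof -
      have "H *\<^sub>v (H *\<^sub>v v) = (H * H) *\<^sub>v v"
        by (rule assoc_mult_mat_vec[symmetric]) (use HC that in auto)
      then show ?thesis using HH that by simp
    qed
    have He: "H *\<^sub>v unit_vec ?D 0 = u" using HHv[OF uC] Hu by simp
    define W where "W = {t \<in> carrier_vec d. H *\<^sub>v vCons 0 t \<in> U}"
    have subW: "subsp d W" unfolding subsp_def
    proof (intro conjI ballI allI)
      show "W \<subseteq> carrier_vec d" unfolding W_def by auto
      have "vCons 0 (0\<^sub>v d) = (0\<^sub>v ?D :: real vec)" by (simp add: zero_vec_Suc)
      moreover have "H *\<^sub>v 0\<^sub>v ?D = 0\<^sub>v ?D" by (rule eq_vecI) (use HC in \<open>auto simp: scalar_prod_def\<close>)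
      ultimately show "0\<^sub>v d \<in> W" unfolding W_def using U0 by simp
    next
      fix s t assume "s \<in> W" "t \<in> W"
      then have s: "s \<in> carrier_vec d" "H *\<^sub>v vCons 0 s \<in> U" and t: "t \<in> carrier_vec d" "H *\<^sub>v vCons 0 t \<in> U"
        unfolding W_def by auto
      have "H *\<^sub>v vCons 0 (s + t) = H *\<^sub>v vCons 0 s + H *\<^sub>v vCons 0 t"
        unfolding vCons_add[OF s(1) t(1)] by (rule mult_add_distrib_mat_vec[OF HC]) (use s t in auto)
      then show "s + t \<in> W" unfolding W_def using s t Uadd by simp
    next
      fix c t assume "t \<in> W"
      then have t: "t \<in> carrier_vec d" "H *\<^sub>v vCons 0 t \<in> U" unfolding W_def by auto
      have "H *\<^sub>v vCons 0 (c \<cdot>\<^sub>v t) = c \<cdot>\<^sub>v (H *\<^sub>v vCons 0 t)"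
        unfolding vCons_smult by (rule mult_mat_vec[OF HC]) (use t in auto)
      then show "c \<cdot>\<^sub>v t \<in> W" unfolding W_def using t Usm by simp
    qed
    from Suc.IH[OF subW] obtain Q' r' where Q': "orth_mat d Q'" and r': "r' \<le> d"
      and QW: "\<forall>t\<in>carrier_vec d. t \<in> W \<longleftrightarrow> (\<forall>k. r' \<le> k \<longrightarrow> k < d \<longrightarrow> (Q' *\<^sub>v t) $ k = 0)" by blast
    have Q'C: "Q' \<in> carrier_mat d d" using orth_carrier[OF Q'] .
    define Q where "Q = ext1 d Q' * H"
    have Qorth: "orth_mat ?D Q" unfolding Q_def by (rule orth_mult[OF ext1_orth[OF Q'] Horth])
    have char: "v \<in> U \<longleftrightarrow> (\<forall>k. Suc r' \<le> k \<longrightarrow> k < ?D \<longrightarrow> (Q *\<^sub>v v) $ k = 0)" if v: "v \<in> carrier_vec ?D" for v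
    proof -
      define z where "z = H *\<^sub>v v"
      have zC: "z \<in> carrier_vec ?D" unfolding z_def using HC v by simp
      define t where "t = vec d (\<lambda>b. z $ Suc b)"
      have tC: "t \<in> carrier_vec d" unfolding t_def by simp
      have "H *\<^sub>v vCons 0 t = H *\<^sub>v (z + (- (z $ 0)) \<cdot>\<^sub>v unit_vec ?D 0)"
        unfolding t_def vCons_split[OF zC] ..
      also have "\<dots> = H *\<^sub>v z + H *\<^sub>v ((- (z $ 0)) \<cdot>\<^sub>v unit_vec ?D 0)"
        by (rule mult_add_distrib_mat_vec[OF HC]) (use zC in auto)
      also have "H *\<^sub>v ((- (z $ 0)) \<cdot>\<^sub>v unit_vec ?D 0) = (- (z $ 0)) \<cdot>\<^sub>v u"
        unfolding mult_mat_vec[OF HC unit_vec_carrier] He ..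
      also have "H *\<^sub>v z = v" unfolding z_def using HHv[OF v] .
      finally have Hvt: "H *\<^sub>v vCons 0 t = v + (- (z $ 0)) \<cdot>\<^sub>v u" .
      have "v \<in> U \<longleftrightarrow> v + (- (z $ 0)) \<cdot>\<^sub>v u \<in> U"
      proof
        assume "v \<in> U" then show "v + (- (z $ 0)) \<cdot>\<^sub>v u \<in> U" using Uadd Usm uU by simp
      next
        assume a: "v + (- (z $ 0)) \<cdot>\<^sub>v u \<in> U"
        have "(v + (- (z $ 0)) \<cdot>\<^sub>v u) + (z $ 0) \<cdot>\<^sub>v u = v"
          by (rule eq_vecI) (use v uC in auto)
        then show "v \<in> U" using Uadd[OF a Usm[of u "z $ 0", OF uU]] by simp
      qed
      also have "\<dots> \<longleftrightarrow> t \<in> W" unfolding W_def using tC Hvt by simp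
      also have "\<dots> \<longleftrightarrow> (\<forall>k. r' \<le> k \<longrightarrow> k < d \<longrightarrow> (Q' *\<^sub>v t) $ k = 0)" using QW tC by blast
      also have "\<dots> \<longleftrightarrow> (\<forall>k. Suc r' \<le> k \<longrightarrow> k < ?D \<longrightarrow> (Q *\<^sub>v v) $ k = 0)"
      proof -
        have Qv: "(Q *\<^sub>v v) $ Suc k = (Q' *\<^sub>v t) $ k" if "k < d" for k
        proof -
          have "Q *\<^sub>v v = ext1 d Q' *\<^sub>v z" unfolding Q_def z_def
            by (rule assoc_mult_mat_vec) (use ext1_carrier HC v in auto)
          then show ?thesis unfolding t_def using ext1_mult[OF Q'C zC that] by simp
        qed
        show ?thesis
        proof
          assume h: "\<forall>k. r' \<le> k \<longrightarrow> k < d \<longrightarrow> (Q' *\<^sub>v t) $ k = 0"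
          show "\<forall>k. Suc r' \<le> k \<longrightarrow> k < ?D \<longrightarrow> (Q *\<^sub>v v) $ k = 0"
          proof (intro allI impI)
            fix k assume k: "Suc r' \<le> k" "k < ?D"
            then obtain k' where k': "k = Suc k'" by (cases k) auto
            then show "(Q *\<^sub>v v) $ k = 0" using h Qv k by auto
          qed
        next
          assume h: "\<forall>k. Suc r' \<le> k \<longrightarrow> k < ?D \<longrightarrow> (Q *\<^sub>v v) $ k = 0"
          show "\<forall>k. r' \<le> k \<longrightarrow> k < d \<longrightarrow> (Q' *\<^sub>v t) $ k = 0"
            using h Qv by (metis Suc_le_mono Suc_less_eq)
        qed
      qed
      finally show ?thesis .
    qed
    show ?thesis using Qorth r' char by (intro exI[of _ Q] exI[of _ "Suc r'"]) auto
  qed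
qed

lemma blk_add: "blk d (x + y) i = blk d x i + blk d y i" if "x \<in> carrier_vec m" "y \<in> carrier_vec m" "i*d + d \<le> m"
  for x y :: "real vec"
proof (rule eq_vecI)
  fix a assume "a < dim_vec (blk d x i + blk d y i)"
  then have a: "a < d" by simp
  then have "i*d+a < m" using that by linarith
  then show "blk d (x + y) i $ a = (blk d x i + blk d y i) $ a" using a that by simp
qed simp

lemma blk_smult: "blk d (c \<cdot>\<^sub>v x) i = c \<cdot>\<^sub>v blk d x i" if "x \<in> carrier_vec m" "i*d + d \<le> m"
  for x :: "real vec"
proof (rule eq_vecI)
  fix a assume "a < dim_vec (c \<cdot>\<^sub>v blk d x i)"
  then have a: "a < d" by simp
  then have "i*d+a < m" using that by linarith
  then show "blk d (c \<cdot>\<^sub>v x) i $ a = (c \<cdot>\<^sub>v blk d x i) $ a" using a that by simp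
qed simp

lemma blk_zero: "i*d + d \<le> m \<Longrightarrow> blk d (0\<^sub>v m) i = (0\<^sub>v d :: real vec)"
  by (rule eq_vecI) auto

lemma blk_bound: "i < n \<Longrightarrow> i*d + d \<le> n*(d::nat)"
proof -
  assume "i < n"
  then have "Suc i * d \<le> n * d" by (intro mult_right_mono) auto
  then show ?thesis by simp
qed

lemma mat_vec_zero: "A \<in> carrier_mat m k \<Longrightarrow> A *\<^sub>v 0\<^sub>v k = (0\<^sub>v m :: real vec)"
  by (rule eq_vecI) (auto simp: scalar_prod_def)

locale gs =
  fixes n :: nat and w :: "nat \<Rightarrow> nat \<Rightarrow> real" and d :: nat and \<sigma> :: "nat \<Rightarrow> nat \<Rightarrow> real mat"
  assumes wg: "weighted_graph n w" and cg: "connected_graph n w" and sg: "signature n w d \<sigma>"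
begin

abbreviation "L \<equiv> conn_lap n w d \<sigma>"
abbreviation "PAR \<equiv> par n w d \<sigma>"

definition U :: "real vec set" where
  "U = {v \<in> carrier_vec d. \<exists>x\<in>carrier_vec (n*d). PAR x \<and> blk d x 0 = v}"

lemma npos: "0 < n" using cg unfolding connected_graph_def by simp

lemma transport_path:
  assumes "(adj n w)\<^sup>*\<^sup>* 0 i"
  shows "\<exists>g. orth_mat d g \<and> (\<forall>x. PAR x \<longrightarrow> blk d x 0 = g *\<^sub>v blk d x i)"
  using assms
proof (induction rule: rtranclp_induct)
  case base
  show ?case by (intro exI[of _ "1\<^sub>m d"]) (simp add: orth_one)
next
  case (step j k)
  from step.IH obtain g where g: "orth_mat d g" "\<forall>x. PAR x \<longrightarrow> blk d x 0 = g *\<^sub>v blk d x j" by blast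
  have gC: "g \<in> carrier_mat d d" using orth_carrier[OF g(1)] .
  have sC: "\<sigma> j k \<in> carrier_mat d d" using sig_carrier[OF sg step.hyps(2)] .
  show ?case
  proof (intro exI conjI allI impI)
    show "orth_mat d (g * \<sigma> j k)" by (rule orth_mult[OF g(1) sig_orth[OF sg step.hyps(2)]])
    fix x assume p: "PAR x"
    have "blk d x 0 = g *\<^sub>v blk d x j" using g p by blast
    also have "blk d x j = \<sigma> j k *\<^sub>v blk d x k" using p step.hyps(2) unfolding par_def by blast
    also have "g *\<^sub>v (\<sigma> j k *\<^sub>v blk d x k) = (g * \<sigma> j k) *\<^sub>v blk d x k"
      by (rule assoc_mult_mat_vec[symmetric]) (use gC sC in auto)
    finally show "blk d x 0 = (g * \<sigma> j k) *\<^sub>v blk d x k" .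
  qed
qed

lemma transport_ex:
  "\<exists>G. G 0 = 1\<^sub>m d \<and> (\<forall>i<n. orth_mat d (G i) \<and> (\<forall>x. PAR x \<longrightarrow> blk d x 0 = G i *\<^sub>v blk d x i))"
proof -
  have "\<forall>i. \<exists>g. i < n \<longrightarrow> orth_mat d g \<and> (\<forall>x. PAR x \<longrightarrow> blk d x 0 = g *\<^sub>v blk d x i)"
    using transport_path npos cg unfolding connected_graph_def by blast
  then obtain G where G: "\<And>i. i < n \<Longrightarrow> orth_mat d (G i) \<and> (\<forall>x. PAR x \<longrightarrow> blk d x 0 = G i *\<^sub>v blk d x i)"
    by metis
  show ?thesis
  proof (intro exI[of _ "G(0 := 1\<^sub>m d)"] conjI allI impI)
    fix i assume i: "i < n"
    show "orth_mat d ((G(0 := 1\<^sub>m d)) i)"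
      using G[OF i] orth_one[of d] by (cases "i = 0") auto
    fix x assume "PAR x"
    show "blk d x 0 = (G(0 := 1\<^sub>m d)) i *\<^sub>v blk d x i"
    proof (cases "i = 0")
      case True then show ?thesis by simp
    next
      case False then show ?thesis using G[OF i] \<open>PAR x\<close> by simp
    qed
  qed simp
qed

lemma par_add: assumes "x \<in> carrier_vec (n*d)" "y \<in> carrier_vec (n*d)" "PAR x" "PAR y"
  shows "PAR (x + y)"
  unfolding par_def
proof (intro allI impI)
  fix i j assume a: "adj n w i j"
  have ij: "i < n" "j < n" using adj_lt[OF a] by auto
  have sC: "\<sigma> i j \<in> carrier_mat d d" using sig_carrier[OF sg a] .
  have "blk d (x + y) i = blk d x i + blk d y i" by (rule blk_add) (use assms blk_bound[OF ij(1)] in auto)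
  also have "\<dots> = \<sigma> i j *\<^sub>v blk d x j + \<sigma> i j *\<^sub>v blk d y j" using assms a unfolding par_def by auto
  also have "\<dots> = \<sigma> i j *\<^sub>v (blk d x j + blk d y j)"
    by (rule mult_add_distrib_mat_vec[symmetric, OF sC]) auto
  also have "blk d x j + blk d y j = blk d (x + y) j" by (rule blk_add[symmetric]) (use assms blk_bound[OF ij(2)] in auto)
  finally show "blk d (x + y) i = \<sigma> i j *\<^sub>v blk d (x + y) j" .
qed

lemma par_smult: assumes "x \<in> carrier_vec (n*d)" "PAR x"
  shows "PAR (c \<cdot>\<^sub>v x)"
  unfolding par_def
proof (intro allI impI)
  fix i j assume a: "adj n w i j"
  have ij: "i < n" "j < n" using adj_lt[OF a] by auto
  have sC: "\<sigma> i j \<in> carrier_mat d d" using sig_carrier[OF sg a] .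
  have "blk d (c \<cdot>\<^sub>v x) i = c \<cdot>\<^sub>v blk d x i" by (rule blk_smult) (use assms blk_bound[OF ij(1)] in auto)
  also have "\<dots> = c \<cdot>\<^sub>v (\<sigma> i j *\<^sub>v blk d x j)" using assms a unfolding par_def by auto
  also have "\<dots> = \<sigma> i j *\<^sub>v (c \<cdot>\<^sub>v blk d x j)"
    by (rule mult_mat_vec[symmetric, OF sC]) auto
  also have "c \<cdot>\<^sub>v blk d x j = blk d (c \<cdot>\<^sub>v x) j" by (rule blk_smult[symmetric]) (use assms blk_bound[OF ij(2)] in auto)
  finally show "blk d (c \<cdot>\<^sub>v x) i = \<sigma> i j *\<^sub>v blk d (c \<cdot>\<^sub>v x) j" .
qed

lemma par_zero: "PAR (0\<^sub>v (n*d))"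
  unfolding par_def
proof (intro allI impI)
  fix i j assume a: "adj n w i j"
  have ij: "i < n" "j < n" using adj_lt[OF a] by auto
  have sC: "\<sigma> i j \<in> carrier_mat d d" using sig_carrier[OF sg a] .
  show "blk d (0\<^sub>v (n * d)) i = \<sigma> i j *\<^sub>v blk d (0\<^sub>v (n * d)) j"
    using blk_zero[OF blk_bound[OF ij(1)]] blk_zero[OF blk_bound[OF ij(2)]] mat_vec_zero[OF sC] by simp
qed

lemma subsp_U: "subsp d U"
  unfolding subsp_def
proof (intro conjI ballI allI)
  show "U \<subseteq> carrier_vec d" unfolding U_def by auto
  have "blk d (0\<^sub>v (n*d)) 0 = 0\<^sub>v d" by (rule blk_zero[OF blk_bound[OF npos]])
  then show "0\<^sub>v d \<in> U" unfolding U_def using par_zero by (auto intro!: bexI[of _ "0\<^sub>v (n*d)"])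
next
  fix u v assume "u \<in> U" "v \<in> U"
  then obtain x y where x: "x \<in> carrier_vec (n*d)" "PAR x" "blk d x 0 = u" and y: "y \<in> carrier_vec (n*d)" "PAR y" "blk d y 0 = v"
    unfolding U_def by auto
  have "blk d (x + y) 0 = u + v" using blk_add[OF x(1) y(1) blk_bound[OF npos]] x y by simp
  then show "u + v \<in> U" unfolding U_def using par_add[OF x(1) y(1) x(2) y(2)] x y by auto
next
  fix c u assume "u \<in> U"
  then obtain x where x: "x \<in> carrier_vec (n*d)" "PAR x" "blk d x 0 = u" unfolding U_def by auto
  have "blk d (c \<cdot>\<^sub>v x) 0 = c \<cdot>\<^sub>v u" using blk_smult[OF x(1) blk_bound[OF npos]] x by simp
  then show "c \<cdot>\<^sub>v u \<in> U" unfolding U_def using par_smult[OF x(1) x(2)] x by (auto intro!: bexI[of _ "c \<cdot>\<^sub>v x"])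
qed

end

locale gs2 = gs +
  fixes G :: "nat \<Rightarrow> real mat" and Q :: "real mat" and r :: nat
  assumes G0: "G 0 = 1\<^sub>m d"
    and Gorth: "\<And>i. i < n \<Longrightarrow> orth_mat d (G i)"
    and Gpar: "\<And>i x. i < n \<Longrightarrow> PAR x \<Longrightarrow> blk d x 0 = G i *\<^sub>v blk d x i"
    and Qorth: "orth_mat d Q" and rd: "r \<le> d"
    and QU: "\<And>v. v \<in> carrier_vec d \<Longrightarrow> v \<in> U \<longleftrightarrow> (\<forall>k. r \<le> k \<longrightarrow> k < d \<longrightarrow> (Q *\<^sub>v v) $ k = 0)"
begin

lemma GC: "i < n \<Longrightarrow> G i \<in> carrier_mat d d" using orth_carrier[OF Gorth] .
lemma QC: "Q \<in> carrier_mat d d" using orth_carrier[OF Qorth] .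

lemma par_blk: assumes "i < n" "PAR x" shows "blk d x i = transpose_mat (G i) *\<^sub>v blk d x 0"
  using orth_TA_vec[OF Gorth[OF assms(1)] blk_carrier, of x i] Gpar[OF assms] by simp

definition lift :: "real vec \<Rightarrow> real vec" where
  "lift v = glue n d (\<lambda>i. transpose_mat (G i) *\<^sub>v v)"

lemma lift_blk: assumes i: "i < n" and v: "v \<in> carrier_vec d" shows "blk d (lift v) i = transpose_mat (G i) *\<^sub>v v"
proof -
  have "transpose_mat (G i) \<in> carrier_mat d d" using GC[OF i] by simp
  then have "transpose_mat (G i) *\<^sub>v v \<in> carrier_vec d" using v by (rule mult_mat_vec_carrier)
  then show ?thesis unfolding lift_def by (rule blk_glue[OF i])
qed

lemma lift_U: assumes "v \<in> U" shows "lift v \<in> carrier_vec (n*d)" "PAR (lift v)"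
proof -
  show "lift v \<in> carrier_vec (n*d)" unfolding lift_def by simp
  obtain x where x: "x \<in> carrier_vec (n*d)" "PAR x" "blk d x 0 = v" using assms unfolding U_def by auto
  have vC: "v \<in> carrier_vec d" using assms unfolding U_def by auto
  have "lift v = x"
  proof (rule vec_eq_blk[of _ n d])
    show "lift v \<in> carrier_vec (n*d)" by (simp add: lift_def)
    show "x \<in> carrier_vec (n*d)" using x(1) .
    fix i assume i: "i < n"
    show "blk d (lift v) i = blk d x i" using lift_blk[OF i vC] par_blk[OF i x(2)] x(3) by simp
  qed
  then show "PAR (lift v)" using x by simp
qed

definition q :: "nat \<Rightarrow> real vec" where "q k = row Q k"

lemma qC: "q k \<in> carrier_vec d" unfolding q_def using QC by auto

lemma Qv: "k < d \<Longrightarrow> (Q *\<^sub>v v) $ k = q k \<bullet> v" unfolding q_def using QC by simp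

lemma qq: assumes "k < d" "l < d" shows "q k \<bullet> q l = (if k = l then 1 else 0)"
proof -
  have "(Q * transpose_mat Q) $$ (k, l) = q k \<bullet> q l" unfolding q_def using QC assms by simp
  then show ?thesis using orth_AT[OF Qorth] assms by simp
qed

lemma qU: assumes "k < r" shows "q k \<in> U"
proof -
  have "(Q *\<^sub>v q k) $ l = 0" if "r \<le> l" "l < d" for l
  proof -
    have "(Q *\<^sub>v q k) $ l = q l \<bullet> q k" using Qv[OF that(2)] .
    also have "\<dots> = 0" using qq[OF that(2), of k] assms that rd by simp
    finally show ?thesis .
  qed
  then show ?thesis using QU[OF qC] by blast
qed

lemma expand: assumes v: "v \<in> carrier_vec d" and b: "b < d"
  shows "v $ b = (\<Sum>k<d. (q k \<bullet> v) * q k $ b)"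
proof -
  have "v $ b = (transpose_mat Q *\<^sub>v (Q *\<^sub>v v)) $ b" using orth_TA_vec[OF Qorth v] by simp
  also have "\<dots> = (\<Sum>k<d. Q $$ (k, b) * (Q *\<^sub>v v) $ k)"
    using QC b v by (simp add: scalar_prod_def lessThan_atLeast0 col_def)
  also have "\<dots> = (\<Sum>k<d. (q k \<bullet> v) * q k $ b)"
    by (intro sum.cong refl) (use QC b in \<open>auto simp: Qv q_def\<close>)
  finally show ?thesis .
qed

lemma expandU: assumes v: "v \<in> U" and b: "b < d"
  shows "v $ b = (\<Sum>k<r. (q k \<bullet> v) * q k $ b)"
proof -
  have vC: "v \<in> carrier_vec d" using v unfolding U_def by auto
  have z: "q k \<bullet> v = 0" if "r \<le> k" "k < d" for k
    using QU[OF vC] v that Qv by auto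
  have "v $ b = (\<Sum>k<d. (q k \<bullet> v) * q k $ b)" by (rule expand[OF vC b])
  also have "\<dots> = (\<Sum>k<r. (q k \<bullet> v) * q k $ b) + (\<Sum>k<d-r. (q (r+k) \<bullet> v) * q (r+k) $ b)"
    using sum_add_split[of "\<lambda>k. (q k \<bullet> v) * q k $ b" r "d-r"] rd by simp
  also have "(\<Sum>k<d-r. (q (r+k) \<bullet> v) * q (r+k) $ b) = 0"
    by (intro sum.neutral ballI) (use z in auto)
  finally show ?thesis by simp
qed

definition X :: "nat \<Rightarrow> real vec" where "X k = lift (q k)"

lemma XC: "k < r \<Longrightarrow> X k \<in> carrier_vec (n*d)" unfolding X_def using lift_U qU by auto
lemma XP: "k < r \<Longrightarrow> PAR (X k)" unfolding X_def using lift_U qU by auto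

lemma XK: assumes k: "k < r" shows "X k \<in> mat_kernel L"
  by (rule mat_kernelI[OF lap_carrier XC[OF k] par_imp_kernel[OF wg sg XC[OF k] XP[OF k]]])

lemma Xdot: assumes k: "k < r" and x: "x \<in> carrier_vec (n*d)" and p: "PAR x"
  shows "X k \<bullet> x = real n * (q k \<bullet> blk d x 0)"
proof -
  have "X k \<bullet> x = (\<Sum>i<n. blk d (X k) i \<bullet> blk d x i)" by (rule scalar_prod_split[OF XC[OF k] x])
  also have "\<dots> = (\<Sum>i<n. q k \<bullet> blk d x 0)"
  proof (intro sum.cong refl)
    fix i assume "i \<in> {..<n}"
    then have i: "i < n" by simp
    have "blk d (X k) i \<bullet> blk d x i = (transpose_mat (G i) *\<^sub>v q k) \<bullet> (transpose_mat (G i) *\<^sub>v blk d x 0)"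
      unfolding X_def lift_blk[OF i qC] par_blk[OF i p] ..
    also have "\<dots> = q k \<bullet> blk d x 0" by (rule orth_scalar[OF orth_transpose[OF Gorth[OF i]] qC blk_carrier])
    finally show "blk d (X k) i \<bullet> blk d x i = q k \<bullet> blk d x 0" .
  qed
  finally show ?thesis by simp
qed

lemma X0: "k < r \<Longrightarrow> blk d (X k) 0 = q k"
  unfolding X_def using lift_blk[OF npos qC] G0 qC by simp

lemma XX: assumes "k < r" "l < r" shows "X k \<bullet> X l = real n * (if k = l then 1 else 0)"
  using Xdot[OF assms(1) XC[OF assms(2)] XP[OF assms(2)]] X0[OF assms(2)] qq[of k l] assms rd by simp

lemma X_inj: "inj_on X {..<r}"
proof (rule inj_onI)
  fix k l assume "k \<in> {..<r}" "l \<in> {..<r}" "X k = X l"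
  then have "X k \<bullet> X k = X k \<bullet> X l" and kl: "k < r" "l < r" by auto
  then show "k = l" using XX[of k k] XX[of k l] npos by (auto split: if_splits)
qed

end

context gs2 begin

lemma lincomb_entry_sum:
  assumes fin: "finite B" and BC: "B \<subseteq> carrier_vec (n*d)" and c: "c < n*d"
  shows "(\<Sum>y\<in>B. a y * y $ c) = (\<Sum>y\<in>B. a y * y $ c)" by simp

lemma kernel_dim_eq: "kernel_dim L = r"
proof -
  interpret K: kernel "n*d" "n*d" L by unfold_locales (rule lap_carrier)
  define B where "B = X ` {..<r}"
  have BK: "B \<subseteq> mat_kernel L" unfolding B_def using XK by auto
  have BC: "B \<subseteq> carrier_vec (n*d)" unfolding B_def using XC by auto
  have finB: "finite B" unfolding B_def by simp
  have cardB: "card B = r" unfolding B_def using card_image[OF X_inj] by simp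
  have sumB: "(\<Sum>y\<in>B. f y) = (\<Sum>k<r. f (X k))" for f :: "real vec \<Rightarrow> real"
    unfolding B_def by (rule sum.reindex[OF X_inj, unfolded comp_def])
  have li: "K.lin_indpt B"
  proof (rule K.Ker.finite_lin_indpt2[OF finB BK])
    fix a assume lc: "K.lincomb a B = 0\<^sub>v (n*d)"
    show "\<forall>v\<in>B. a v = 0"
    proof
      fix v assume "v \<in> B"
      then obtain k where k: "k < r" and v: "v = X k" unfolding B_def by auto
      have dl: "dim_vec (K.lincomb a B) = n*d" by (simp add: lc)
      have z: "X k \<bullet> (0\<^sub>v (n*d)) = 0" using XC[OF k] by simp
      have "0 = X k \<bullet> K.lincomb a B" by (subst lc) (rule z[symmetric])
      also have "\<dots> = (\<Sum>c\<in>{0..<n*d}. X k $ c * (\<Sum>y\<in>B. a y * y $ c))"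
        unfolding scalar_prod_def dl
        by (intro sum.cong refl) (simp add: K.lincomb_index[OF _ BK])
      also have "\<dots> = (\<Sum>y\<in>B. \<Sum>c\<in>{0..<n*d}. X k $ c * (a y * y $ c))"
        unfolding sum_distrib_left by (rule sum.swap)
      also have "\<dots> = (\<Sum>y\<in>B. a y * (X k \<bullet> y))"
      proof (intro sum.cong refl)
        fix y assume "y \<in> B"
        then have "dim_vec y = n*d" using BC by auto
        then show "(\<Sum>c\<in>{0..<n*d}. X k $ c * (a y * y $ c)) = a y * (X k \<bullet> y)"
          by (simp add: scalar_prod_def sum_distrib_left algebra_simps)
      qed
      also have "\<dots> = (\<Sum>l<r. a (X l) * (X k \<bullet> X l))" by (rule sumB)
      also have "\<dots> = (\<Sum>l<r. if l = k then a (X k) * real n else 0)"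
        by (intro sum.cong refl) (simp add: XX[OF k])
      also have "\<dots> = a (X k) * real n" using k by simp
      finally show "a v = 0" using v npos by simp
    qed
  qed
  have gen: "K.span B = mat_kernel L"
  proof (rule equalityI)
    show "K.span B \<subseteq> mat_kernel L" by (rule K.Ker.span_is_subset2[OF BK])
    show "mat_kernel L \<subseteq> K.span B"
    proof
      fix x assume xK: "x \<in> mat_kernel L"
      have x: "x \<in> carrier_vec (n*d)" and Lx: "L *\<^sub>v x = 0\<^sub>v (n*d)" using mat_kernelD[OF lap_carrier xK] by auto
      have p: "PAR x" by (rule kernel_imp_par[OF wg sg x Lx])
      define x0 where "x0 = blk d x 0"
      have x0U: "x0 \<in> U" unfolding U_def x0_def using x p by auto
      define a where "a y = (y \<bullet> x) / real n" for y
      have aX: "a (X k) = q k \<bullet> x0" if "k < r" for k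
        unfolding a_def Xdot[OF that x p] x0_def using npos by simp
      have "K.lincomb a B = x"
      proof (rule eq_vecI)
        have "K.lincomb a B = K.NC.lincomb a B" by (rule K.lincomb_same[OF BK])
        then show dimeq: "dim_vec (K.lincomb a B) = dim_vec x" using K.NC.lincomb_dim[OF finB BC] x by simp
        fix c assume "c < dim_vec x"
        then have c: "c < n*d" using x by simp
        then have dpos: "0 < d" by (cases d) auto
        define i where "i = c div d"
        define e where "e = c mod d"
        have i: "i < n" unfolding i_def using c by (simp add: less_mult_imp_div_less)
        have e: "e < d" unfolding e_def using dpos by simp
        have ce: "c = i*d + e" unfolding i_def e_def by simp
        have GiC: "transpose_mat (G i) \<in> carrier_mat d d" using GC[OF i] by simp
        have "K.lincomb a B $ c = (\<Sum>y\<in>B. a y * y $ c)" by (rule K.lincomb_index[OF c BK])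
        also have "\<dots> = (\<Sum>k<r. a (X k) * X k $ c)" by (rule sumB)
        also have "\<dots> = (\<Sum>k<r. (q k \<bullet> x0) * (\<Sum>b<d. G i $$ (b, e) * q k $ b))"
        proof (intro sum.cong refl)
          fix k assume "k \<in> {..<r}"
          then have k: "k < r" by simp
          have "X k $ c = blk d (X k) i $ e" unfolding ce using e by simp
          also have "\<dots> = (transpose_mat (G i) *\<^sub>v q k) $ e" unfolding X_def lift_blk[OF i qC] ..
          also have "\<dots> = (\<Sum>b<d. G i $$ (b, e) * q k $ b)"
            using GC[OF i] e qC[of k] by (simp add: scalar_prod_def lessThan_atLeast0 row_def)
          finally show "a (X k) * X k $ c = (q k \<bullet> x0) * (\<Sum>b<d. G i $$ (b, e) * q k $ b)"
            using aX[OF k] by simp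
        qed
        also have "\<dots> = (\<Sum>b<d. G i $$ (b, e) * (\<Sum>k<r. (q k \<bullet> x0) * q k $ b))"
          by (simp add: sum_distrib_left sum.swap[of _ "{..<r}"] algebra_simps)
        also have "\<dots> = (\<Sum>b<d. G i $$ (b, e) * x0 $ b)"
          by (intro sum.cong refl) (simp add: expandU[OF x0U])
        also have "\<dots> = (transpose_mat (G i) *\<^sub>v x0) $ e"
          using GC[OF i] e x0_def by (simp add: scalar_prod_def lessThan_atLeast0 row_def)
        also have "\<dots> = blk d x i $ e" unfolding x0_def par_blk[OF i p] ..
        also have "\<dots> = x $ c" unfolding ce using e by simp
        finally show "K.lincomb a B $ c = x $ c" .
      qed
      then show "x \<in> K.span B" unfolding K.Ker.finite_span[OF finB BK] by blast
    qed
  qed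
  have "K.basis B" unfolding K.Ker.basis_def using li gen BK by simp
  then have "K.dim = card B" by (rule K.Ker.dim_basis[OF finB])
  then show ?thesis using cardB K.kernel_dim by simp
qed

end

lemma row_mult_vec: assumes A: "(A :: real mat) \<in> carrier_mat m k" and C: "C \<in> carrier_mat k p" and i: "i < m"
  shows "row (A * C) i = transpose_mat C *\<^sub>v row A i"
proof (rule eq_vecI)
  fix j assume "j < dim_vec (transpose_mat C *\<^sub>v row A i)"
  then have j: "j < p" using C by simp
  have "row (A * C) i $ j = row A i \<bullet> col C j" using A C i j by simp
  also have "\<dots> = col C j \<bullet> row A i" by (rule comm_scalar_prod[where n=k]) (use A C j in auto)
  also have "\<dots> = (transpose_mat C *\<^sub>v row A i) $ j" using C j by simp
  finally show "row (A * C) i $ j = (transpose_mat C *\<^sub>v row A i) $ j" .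
qed (use A C i in simp)

lemma entry_conj: assumes A: "(A :: real mat) \<in> carrier_mat d d" and C: "C \<in> carrier_mat d d" and D: "D \<in> carrier_mat d d"
  and k: "k < d" and l: "l < d"
  shows "(A * C * transpose_mat D) $$ (k, l) = (transpose_mat C *\<^sub>v row A k) \<bullet> row D l"
proof -
  have "(A * C * transpose_mat D) $$ (k, l) = row (A * C) k \<bullet> col (transpose_mat D) l"
    by (rule index_mult_mat(1)) (use A C D k l in auto)
  also have "col (transpose_mat D) l = row D l" using D l by simp
  also have "row (A * C) k = transpose_mat C *\<^sub>v row A k" by (rule row_mult_vec[OF A C k])
  finally show ?thesis .
qed

lemma iota_sum_one: "iota_sum k i j = 1\<^sub>m k"
proof (induction k)
  case 0 then show ?case by simp
next
  case (Suc k)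
  have "four_block_mat (1\<^sub>m k) (0\<^sub>m k 1) (0\<^sub>m 1 k) (1\<^sub>m 1) = (1\<^sub>m (Suc k) :: real mat)"
    by (rule eq_matI) auto
  then show ?case using Suc by (simp add: sig_dsum_def iota1_def)
qed

context gs2 begin

definition f :: "nat \<Rightarrow> real mat" where "f i = Q * G i"

lemma f_orth: "i < n \<Longrightarrow> orth_mat d (f i)" unfolding f_def by (rule orth_mult[OF Qorth Gorth])
lemma fC: "i < n \<Longrightarrow> f i \<in> carrier_mat d d" using orth_carrier[OF f_orth] .

lemma row_f: assumes i: "i < n" and k: "k < d" shows "row (f i) k = transpose_mat (G i) *\<^sub>v q k"
  unfolding f_def q_def by (rule row_mult_vec[OF QC GC[OF i] k])

definition M :: "nat \<Rightarrow> nat \<Rightarrow> real mat" where "M i j = f i * \<sigma> i j * transpose_mat (f j)"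

lemma MC: "adj n w i j \<Longrightarrow> M i j \<in> carrier_mat d d"
  unfolding M_def using fC adj_lt sig_carrier[OF sg] by (meson mult_carrier_mat transpose_carrier_mat)

lemma M_orth: "adj n w i j \<Longrightarrow> orth_mat d (M i j)"
  unfolding M_def using f_orth adj_lt sig_orth[OF sg] by (meson orth_mult orth_transpose)

lemma M_entry: assumes a: "adj n w i j" and k: "k < d" and l: "l < d"
  shows "M i j $$ (k, l) = (transpose_mat (G i) *\<^sub>v q k) \<bullet> (\<sigma> i j *\<^sub>v (transpose_mat (G j) *\<^sub>v q l))"
proof -
  have ij: "i < n" "j < n" using adj_lt[OF a] by auto
  have sC: "\<sigma> i j \<in> carrier_mat d d" using sig_carrier[OF sg a] .
  have GiC: "transpose_mat (G i) \<in> carrier_mat d d" and GjC: "transpose_mat (G j) \<in> carrier_mat d d"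
    using GC ij by auto
  have "M i j $$ (k, l) = (transpose_mat (\<sigma> i j) *\<^sub>v row (f i) k) \<bullet> row (f j) l"
    unfolding M_def by (rule entry_conj[OF fC[OF ij(1)] sC fC[OF ij(2)] k l])
  also have "\<dots> = row (f i) k \<bullet> (\<sigma> i j *\<^sub>v row (f j) l)"
    by (rule transpose_vec_mult_scalar[OF sC]) (use fC ij k l in auto)
  finally show ?thesis unfolding row_f[OF ij(1) k] row_f[OF ij(2) l] .
qed

lemma M_entry_low: assumes a: "adj n w i j" and k: "k < d" and l: "l < r"
  shows "M i j $$ (k, l) = (if k = l then 1 else 0)"
proof -
  have ij: "i < n" "j < n" using adj_lt[OF a] by auto
  have "blk d (X l) i = \<sigma> i j *\<^sub>v blk d (X l) j" using XP[OF l] a unfolding par_def by blast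
  then have "\<sigma> i j *\<^sub>v (transpose_mat (G j) *\<^sub>v q l) = transpose_mat (G i) *\<^sub>v q l"
    unfolding X_def lift_blk[OF ij(1) qC] lift_blk[OF ij(2) qC] by simp
  then have "M i j $$ (k, l) = (transpose_mat (G i) *\<^sub>v q k) \<bullet> (transpose_mat (G i) *\<^sub>v q l)"
    using M_entry[OF a k] l rd by simp
  also have "\<dots> = q k \<bullet> q l" by (rule orth_scalar[OF orth_transpose[OF Gorth[OF ij(1)]] qC qC])
  finally show ?thesis using qq[OF k, of l] l rd by simp
qed

lemma M_entry_up: assumes a: "adj n w i j" and k: "k < r" and l: "r \<le> l" "l < d"
  shows "M i j $$ (k, l) = 0"
proof -
  have ij: "i < n" "j < n" using adj_lt[OF a] by auto
  have ji: "adj n w j i" using adj_sym[OF wg a] .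
  have sC: "\<sigma> i j \<in> carrier_mat d d" using sig_carrier[OF sg a] .
  have GiC: "transpose_mat (G j) \<in> carrier_mat d d" using GC ij by auto
  have "blk d (X k) j = \<sigma> j i *\<^sub>v blk d (X k) i" using XP[OF k] ji unfolding par_def by blast
  then have par: "\<sigma> j i *\<^sub>v (transpose_mat (G i) *\<^sub>v q k) = transpose_mat (G j) *\<^sub>v q k"
    unfolding X_def lift_blk[OF ij(1) qC] lift_blk[OF ij(2) qC] by simp
  have "M i j $$ (k, l) = (transpose_mat (G i) *\<^sub>v q k) \<bullet> (\<sigma> i j *\<^sub>v (transpose_mat (G j) *\<^sub>v q l))"
    using M_entry[OF a _ l(2)] k rd by simp
  also have "\<dots> = (transpose_mat (\<sigma> i j) *\<^sub>v (transpose_mat (G i) *\<^sub>v q k)) \<bullet> (transpose_mat (G j) *\<^sub>v q l)"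
    by (rule transpose_vec_mult_scalar[symmetric, OF sC]) (use GC[OF ij(1)] GC[OF ij(2)] qC[of k] qC[of l] in auto)
  also have "\<dots> = (transpose_mat (G j) *\<^sub>v q k) \<bullet> (transpose_mat (G j) *\<^sub>v q l)"
    using par sig_transp[OF sg a] by simp
  also have "\<dots> = q k \<bullet> q l" by (rule orth_scalar[OF orth_transpose[OF Gorth[OF ij(2)]] qC qC])
  finally show ?thesis using qq[of k l] k l rd by simp
qed

lemma M_transp: assumes a: "adj n w i j" and k: "k < d" and l: "l < d"
  shows "M j i $$ (l, k) = M i j $$ (k, l)"
proof -
  have ij: "i < n" "j < n" using adj_lt[OF a] by auto
  have ji: "adj n w j i" using adj_sym[OF wg a] .
  have sC: "\<sigma> i j \<in> carrier_mat d d" using sig_carrier[OF sg a] .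
  have GiC: "transpose_mat (G i) \<in> carrier_mat d d" and GjC: "transpose_mat (G j) \<in> carrier_mat d d"
    using GC ij by auto
  have "M j i $$ (l, k) = (transpose_mat (G j) *\<^sub>v q l) \<bullet> (transpose_mat (\<sigma> i j) *\<^sub>v (transpose_mat (G i) *\<^sub>v q k))"
    using M_entry[OF ji l k] sig_transp[OF sg a] by simp
  also have "\<dots> = (\<sigma> i j *\<^sub>v (transpose_mat (G j) *\<^sub>v q l)) \<bullet> (transpose_mat (G i) *\<^sub>v q k)"
    by (rule transp_scalar[OF sC]) (use GiC GjC qC in auto)
  also have "\<dots> = (transpose_mat (G i) *\<^sub>v q k) \<bullet> (\<sigma> i j *\<^sub>v (transpose_mat (G j) *\<^sub>v q l))"
    by (rule comm_scalar_prod[where n=d]) (use GiC GjC qC sC in auto)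
  finally show ?thesis using M_entry[OF a k l] by simp
qed

definition tau :: "nat \<Rightarrow> nat \<Rightarrow> real mat" where
  "tau i j = mat (d-r) (d-r) (\<lambda>(a,b). M i j $$ (r+a, r+b))"

lemma tauC: "tau i j \<in> carrier_mat (d-r) (d-r)" unfolding tau_def by simp

lemma M_block: assumes a: "adj n w i j"
  shows "M i j = four_block_mat (1\<^sub>m r) (0\<^sub>m r (d-r)) (0\<^sub>m (d-r) r) (tau i j)"
proof (rule eq_matI)
  show "dim_row (M i j) = dim_row (four_block_mat (1\<^sub>m r) (0\<^sub>m r (d-r)) (0\<^sub>m (d-r) r) (tau i j))"
    using MC[OF a] rd by (simp add: tau_def)
  show "dim_col (M i j) = dim_col (four_block_mat (1\<^sub>m r) (0\<^sub>m r (d-r)) (0\<^sub>m (d-r) r) (tau i j))"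
    using MC[OF a] rd by (simp add: tau_def)
  fix k l assume "k < dim_row (four_block_mat (1\<^sub>m r) (0\<^sub>m r (d-r)) (0\<^sub>m (d-r) r) (tau i j))"
    "l < dim_col (four_block_mat (1\<^sub>m r) (0\<^sub>m r (d-r)) (0\<^sub>m (d-r) r) (tau i j))"
  then have k: "k < d" and l: "l < d" using rd by (auto simp: tau_def)
  have "four_block_mat (1\<^sub>m r) (0\<^sub>m r (d-r)) (0\<^sub>m (d-r) r) (tau i j) $$ (k, l) =
     (if k < r then if l < r then (if k = l then 1 else 0) else 0
      else if l < r then 0 else M i j $$ (k, l))"
    using k l rd by (simp add: tau_def)
  also have "\<dots> = M i j $$ (k, l)"
  proof -
    have "k < r \<Longrightarrow> \<not> l < r \<Longrightarrow> M i j $$ (k, l) = 0" using M_entry_up[OF a _ _ l] by simp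
    moreover have "l < r \<Longrightarrow> M i j $$ (k, l) = (if k = l then 1 else 0)" using M_entry_low[OF a k] by simp
    ultimately show ?thesis by auto
  qed
  finally show "M i j $$ (k, l) = four_block_mat (1\<^sub>m r) (0\<^sub>m r (d-r)) (0\<^sub>m (d-r) r) (tau i j) $$ (k, l)" ..
qed

lemma tau_transp: assumes a: "adj n w i j" shows "tau j i = transpose_mat (tau i j)"
  by (rule eq_matI) (use M_transp[OF a] rd in \<open>auto simp: tau_def\<close>)

lemma tau_orth: assumes a: "adj n w i j" shows "orth_mat (d-r) (tau i j)"
proof -
  have MM: "transpose_mat (M i j) * M i j = 1\<^sub>m d" using orth_TA[OF M_orth[OF a]] .
  have "transpose_mat (tau i j) * tau i j = 1\<^sub>m (d-r)"
  proof (rule eq_matI)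
    fix x y assume "x < dim_row (1\<^sub>m (d - r))" "y < dim_col (1\<^sub>m (d - r))"
    then have x: "x < d-r" and y: "y < d-r" by auto
    have "(transpose_mat (tau i j) * tau i j) $$ (x, y) = (\<Sum>c<d-r. M i j $$ (r+c, r+x) * M i j $$ (r+c, r+y))"
      using x y by (simp add: tau_def scalar_prod_def lessThan_atLeast0 row_def col_def)
    also have "\<dots> = (\<Sum>c<r. M i j $$ (c, r+x) * M i j $$ (c, r+y)) + (\<Sum>c<d-r. M i j $$ (r+c, r+x) * M i j $$ (r+c, r+y))"
      using M_entry_up[OF a, of _ "r+x"] x by simp
    also have "\<dots> = (\<Sum>c<d. M i j $$ (c, r+x) * M i j $$ (c, r+y))"
      using sum_add_split[of "\<lambda>c. M i j $$ (c, r+x) * M i j $$ (c, r+y)" r "d-r"] rd by simp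
    also have "\<dots> = (transpose_mat (M i j) * M i j) $$ (r+x, r+y)"
      using MC[OF a] x y by (simp add: scalar_prod_def lessThan_atLeast0 row_def col_def)
    also have "\<dots> = 1\<^sub>m (d-r) $$ (x, y)" unfolding MM using x y by simp
    finally show "(transpose_mat (tau i j) * tau i j) $$ (x, y) = 1\<^sub>m (d-r) $$ (x, y)" .
  qed (auto simp: tau_def)
  then show ?thesis unfolding orth_mat_def using tauC by simp
qed

lemma tau_sig: "signature n w (d-r) tau"
  unfolding signature_def using tau_orth tau_transp by blast

lemma switch: "switch_equiv n w d \<sigma> (sig_dsum r (d-r) (iota_sum r) tau)"
  unfolding switch_equiv_def
proof (intro exI[of _ f] conjI allI impI)
  fix i assume "i < n" then show "orth_mat d (f i)" by (rule f_orth)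
next
  fix i j assume a: "adj n w i j"
  have ij: "i < n" "j < n" using adj_lt[OF a] by auto
  have sC: "\<sigma> i j \<in> carrier_mat d d" using sig_carrier[OF sg a] .
  have "sig_dsum r (d-r) (iota_sum r) tau i j = M i j"
    unfolding sig_dsum_def iota_sum_one M_block[OF a] ..
  also have "M i j * f j = (f i * \<sigma> i j) * (transpose_mat (f j) * f j)"
    unfolding M_def by (rule assoc_mult_mat[of "f i * \<sigma> i j" d d "transpose_mat (f j)" d "f j" d]) (use fC[OF ij(1)] fC[OF ij(2)] sC in auto)
  also have "\<dots> = f i * \<sigma> i j" using orth_TA[OF f_orth[OF ij(2)]] fC[OF ij(1)] sC by simp
  finally show "f i * \<sigma> i j = sig_dsum r (d-r) (iota_sum r) tau i j * f j" by simp
qed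

end

context gs2 begin

lemma M_vec: assumes a: "adj n w i j" and v: "v \<in> carrier_vec d"
  shows "M i j *\<^sub>v v = f i *\<^sub>v (\<sigma> i j *\<^sub>v (transpose_mat (f j) *\<^sub>v v))"
proof -
  have ij: "i < n" "j < n" using adj_lt[OF a] by auto
  have sC: "\<sigma> i j \<in> carrier_mat d d" using sig_carrier[OF sg a] .
  have fiC: "f i \<in> carrier_mat d d" and fjC: "transpose_mat (f j) \<in> carrier_mat d d" using fC ij by auto
  have "M i j *\<^sub>v v = (f i * \<sigma> i j) *\<^sub>v (transpose_mat (f j) *\<^sub>v v)"
    unfolding M_def by (rule assoc_mult_mat_vec[of _ d d _ d]) (use fiC fjC sC v in auto)
  also have "\<dots> = f i *\<^sub>v (\<sigma> i j *\<^sub>v (transpose_mat (f j) *\<^sub>v v))"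
    by (rule assoc_mult_mat_vec[of _ d d _ d]) (use fiC fjC sC v in auto)
  finally show ?thesis .
qed

lemma ker_tau_zero:
  assumes yC: "y \<in> carrier_vec (n*(d-r))" and Ly: "conn_lap n w (d-r) tau *\<^sub>v y = 0\<^sub>v (n*(d-r))"
  shows "y = 0\<^sub>v (n*(d-r))"
proof -
  have py: "par n w (d-r) tau y" by (rule kernel_imp_par[OF wg tau_sig yC Ly])
  define p where "p i = vec d (\<lambda>a. if a < r then 0 else blk (d-r) y i $ (a - r))" for i
  have pC: "p i \<in> carrier_vec d" for i unfolding p_def by simp
  have Mp: "M i j *\<^sub>v p j = p i" if a: "adj n w i j" for i j
  proof (rule eq_vecI)
    show "dim_vec (M i j *\<^sub>v p j) = dim_vec (p i)" using MC[OF a] by (simp add: p_def)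
    fix k assume "k < dim_vec (p i)"
    then have k: "k < d" by (simp add: p_def)
    have "(M i j *\<^sub>v p j) $ k = (\<Sum>l<d. M i j $$ (k, l) * p j $ l)"
      using MC[OF a] k pC[of j] by (simp add: scalar_prod_def lessThan_atLeast0 row_def)
    also have "\<dots> = (\<Sum>l<r. M i j $$ (k, l) * p j $ l) + (\<Sum>l<d-r. M i j $$ (k, r+l) * p j $ (r+l))"
      using sum_add_split[of "\<lambda>l. M i j $$ (k, l) * p j $ l" r "d-r"] rd by simp
    also have "(\<Sum>l<r. M i j $$ (k, l) * p j $ l) = 0"
      by (intro sum.neutral ballI) (use rd in \<open>auto simp: p_def\<close>)
    also have "(\<Sum>l<d-r. M i j $$ (k, r+l) * p j $ (r+l)) = (\<Sum>l<d-r. M i j $$ (k, r+l) * blk (d-r) y j $ l)"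
      by (intro sum.cong refl) (auto simp: p_def)
    also have "0 + \<dots> = p i $ k"
    proof (cases "k < r")
      case True
      then show ?thesis using M_entry_up[OF a True] k by (simp add: p_def)
    next
      case False
      define k' where "k' = k - r"
      have kk: "k = r + k'" "k' < d - r" using False k unfolding k'_def by auto
      have "(\<Sum>l<d-r. M i j $$ (k, r+l) * blk (d-r) y j $ l) = (\<Sum>l<d-r. tau i j $$ (k', l) * blk (d-r) y j $ l)"
        by (intro sum.cong refl) (use kk in \<open>auto simp: tau_def\<close>)
      also have "\<dots> = (tau i j *\<^sub>v blk (d-r) y j) $ k'"
        using kk tauC[of i j] by (simp add: scalar_prod_def lessThan_atLeast0 row_def)
      also have "tau i j *\<^sub>v blk (d-r) y j = blk (d-r) y i" using py a unfolding par_def by simp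
      finally show ?thesis using kk False k by (simp add: p_def)
    qed
    finally show "(M i j *\<^sub>v p j) $ k = p i $ k" by simp
  qed
  define z where "z = glue n d (\<lambda>i. transpose_mat (f i) *\<^sub>v p i)"
  have fpC: "transpose_mat (f i) *\<^sub>v p i \<in> carrier_vec d" if "i < n" for i
  proof -
    have "transpose_mat (f i) \<in> carrier_mat d d" using fC[OF that] by simp
    then show ?thesis using pC by (rule mult_mat_vec_carrier)
  qed
  have zC: "z \<in> carrier_vec (n*d)" unfolding z_def by simp
  have zblk: "blk d z i = transpose_mat (f i) *\<^sub>v p i" if "i < n" for i
    unfolding z_def by (rule blk_glue[where F="\<lambda>i. transpose_mat (f i) *\<^sub>v p i", OF that fpC[OF that]])
  have pz: "PAR z" unfolding par_def
  proof (intro allI impI)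
    fix i j assume a: "adj n w i j"
    have ij: "i < n" "j < n" using adj_lt[OF a] by auto
    have sC: "\<sigma> i j \<in> carrier_mat d d" using sig_carrier[OF sg a] .
    have "transpose_mat (f i) *\<^sub>v p i = transpose_mat (f i) *\<^sub>v (M i j *\<^sub>v p j)" using Mp[OF a] by simp
    also have "\<dots> = \<sigma> i j *\<^sub>v (transpose_mat (f j) *\<^sub>v p j)"
      unfolding M_vec[OF a pC] by (rule orth_TA_vec[OF f_orth[OF ij(1)]]) (use sC fpC[OF ij(2)] in auto)
    finally show "blk d z i = \<sigma> i j *\<^sub>v blk d z j" unfolding zblk[OF ij(1)] zblk[OF ij(2)] .
  qed
  have z0U: "blk d z 0 \<in> U" unfolding U_def using zC pz by auto
  have f0: "f 0 = Q" unfolding f_def G0 using QC by simp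
  have z0: "blk d z 0 = transpose_mat Q *\<^sub>v p 0" using zblk[OF npos] f0 by simp
  have p0: "p 0 = 0\<^sub>v d"
  proof (rule eq_vecI)
    fix k assume "k < dim_vec (0\<^sub>v d)"
    then have k: "k < d" by simp
    show "p 0 $ k = 0\<^sub>v d $ k"
    proof (cases "k < r")
      case True then show ?thesis using k by (simp add: p_def)
    next
      case False
      have "(Q *\<^sub>v blk d z 0) $ k = 0" using QU[OF blk_carrier] z0U False k by auto
      moreover have "Q *\<^sub>v blk d z 0 = p 0" unfolding z0 by (rule orth_AT_vec[OF Qorth pC])
      ultimately show ?thesis using k by simp
    qed
  qed (simp add: p_def)
  have zb0: "blk d z 0 = 0\<^sub>v d" unfolding z0 p0 by (rule mat_vec_zero) (use QC in simp)
  have pi0: "p i = 0\<^sub>v d" if i: "i < n" for i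
  proof -
    have "blk d z i = transpose_mat (G i) *\<^sub>v blk d z 0" by (rule par_blk[OF i pz])
    also have "\<dots> = 0\<^sub>v d" unfolding zb0 by (rule mat_vec_zero) (use GC[OF i] in simp)
    finally have "transpose_mat (f i) *\<^sub>v p i = 0\<^sub>v d" using zblk[OF i] by simp
    then have "f i *\<^sub>v (transpose_mat (f i) *\<^sub>v p i) = 0\<^sub>v d" using mat_vec_zero[OF fC[OF i]] by simp
    then show ?thesis using orth_AT_vec[OF f_orth[OF i] pC] by simp
  qed
  show ?thesis
  proof (rule vec_eq_blk[of _ n "d-r"])
    show "y \<in> carrier_vec (n * (d - r))" by (rule yC)
    show "0\<^sub>v (n * (d - r)) \<in> carrier_vec (n * (d - r))" by simp
    fix i assume i: "i < n"
    show "blk (d - r) y i = blk (d - r) (0\<^sub>v (n * (d - r))) i"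
    proof (rule eq_vecI)
      fix a assume "a < dim_vec (blk (d - r) (0\<^sub>v (n * (d - r))) i)"
      then have a: "a < d - r" by simp
      have "p i $ (r + a) = blk (d-r) y i $ a" using a by (simp add: p_def)
      then have "blk (d-r) y i $ a = 0" using pi0[OF i] a by simp
      then show "blk (d - r) y i $ a = blk (d - r) (0\<^sub>v (n * (d - r))) i $ a"
        using a idx_lt[OF i a] by simp
    qed simp
  qed
qed

lemma tau_invertible: "invertible_mat (conn_lap n w (d-r) tau)"
proof -
  let ?N = "n*(d-r)"
  let ?A = "conn_lap n w (d-r) tau"
  have AC: "?A \<in> carrier_mat ?N ?N" by (rule lap_carrier)
  have "det ?A \<noteq> 0"
    unfolding det_0_iff_vec_prod_zero_field[OF AC] using ker_tau_zero by blast
  from det_non_zero_imp_unit[OF AC this, of "()"]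
  obtain B where B: "B \<in> carrier_mat ?N ?N" "B * ?A = 1\<^sub>m ?N" "?A * B = 1\<^sub>m ?N"
    unfolding Units_def by (auto simp: ring_mat_def)
  show ?thesis unfolding invertible_mat_def inverts_mat_def
    using AC B by (intro conjI exI[of _ B]) auto
qed

end

theorem theorem2p9:
  fixes n d :: nat and w :: "nat \<Rightarrow> nat \<Rightarrow> real" and \<sigma> :: "nat \<Rightarrow> nat \<Rightarrow> real mat"
  assumes "weighted_graph n w"
    and "connected_graph n w"
    and "signature n w d \<sigma>"
    and "\<not> consistent n w d \<sigma>"
  shows "let \<rho> = kernel_dim (conn_lap n w d \<sigma>) in
    \<exists>\<tau>. signature n w (d - \<rho>) \<tau> \<and>
        invertible_mat (conn_lap n w (d - \<rho>) \<tau>) \<and>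
        switch_equiv n w d \<sigma> (sig_dsum \<rho> (d - \<rho>) (iota_sum \<rho>) \<tau>)"
proof -
  interpret gs n w d \<sigma> using assms(1-3) by unfold_locales
  obtain G where G0: "G 0 = 1\<^sub>m d"
    and G: "\<And>i. i < n \<Longrightarrow> orth_mat d (G i) \<and> (\<forall>x. par n w d \<sigma> x \<longrightarrow> blk d x 0 = G i *\<^sub>v blk d x i)"
    using transport_ex by blast
  obtain Q r where Q: "orth_mat d Q" and rd: "r \<le> d"
    and QU: "\<forall>v\<in>carrier_vec d. v \<in> U \<longleftrightarrow> (\<forall>k. r \<le> k \<longrightarrow> k < d \<longrightarrow> (Q *\<^sub>v v) $ k = 0)"
    using subspace_decomp[OF subsp_U] by blast
  interpret gs2 n w d \<sigma> G Q r
    by unfold_locales (use G0 G Q rd QU in auto)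
  show ?thesis
    unfolding Let_def kernel_dim_eq
    using tau_sig tau_invertible switch by blast
qed

end
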